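(* Let $A=\langle a_1,a_2\mid \Pi(a_1,a_2,m_A)=\Pi(a_2,a_1,m_A)\rangle$ be a dihedral Artin group with $m_A<\infty$. Let $k_1,k_2\in\mathbb{Z}$ with $k_2\neq0$. Then the centralizer of $\delta_A^{k_1}a_1^{k_2}$ in $A$ is the free abelian group generated by $\delta_A$ and $a_1$.
   Context: $\Pi(s,t,m)$ denotes the alternating word $sts\cdots$ of length $m$; $m_A\ge 2$ is an integer. $\Delta_A=\Pi(a_1,a_2,m_A)=\Pi(a_2,a_1,m_A)$ is the Garside element, and $\delta_A=\Delta_A^2$ if $m_A$ is odd, $\delta_A=\Delta_A$ if $m_A$ is even. *)

theory Defs
  imports Main
begin

text \<open>A letter is (generator, sign), sign True = positive
  letter, sign False = inverse letter.  Group elements are words modulo the congruence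
  artin_eq m generated by free cancellation and the braid relation.\<close>

type_synonym letter = "bool \<times> bool"
type_synonym word = "letter list"

definition gen :: "bool \<Rightarrow> word" where
  "gen s = [(s, True)]"

definition a1 :: word where "a1 = gen False"
definition a2 :: word where "a2 = gen True"

definition inv_letter :: "letter \<Rightarrow> letter" where
  "inv_letter x = (fst x, \<not> snd x)"

definition inv_word :: "word \<Rightarrow> word" where
  "inv_word w = rev (map inv_letter w)"

fun Pi :: "bool \<Rightarrow> bool \<Rightarrow> nat \<Rightarrow> word" where
  "Pi s t 0 = []"
| "Pi s t (Suc n) = (s, True) # Pi t s n"

inductive artin_eq :: "nat \<Rightarrow> word \<Rightarrow> word \<Rightarrow> bool" for m :: nat where
  refl: "artin_eq m w w"
| sym: "artin_eq m u v \<Longrightarrow> artin_eq m v u"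
| trans: "artin_eq m u v \<Longrightarrow> artin_eq m v w \<Longrightarrow> artin_eq m u w"
| cong: "artin_eq m u v \<Longrightarrow> artin_eq m (x @ u @ y) (x @ v @ y)"
| cancel: "artin_eq m [x, inv_letter x] []"
| braid: "artin_eq m (Pi False True m) (Pi True False m)"

definition Delta :: "nat \<Rightarrow> word" where
  "Delta m = Pi False True m"

definition delta :: "nat \<Rightarrow> word" where
  "delta m = (if odd m then Delta m @ Delta m else Delta m)"

definition word_pow :: "word \<Rightarrow> int \<Rightarrow> word" where
  "word_pow w k = (if 0 \<le> k then concat (replicate (nat k) w)
                   else concat (replicate (nat (- k)) (inv_word w)))"

definition centralizer_words :: "nat \<Rightarrow> word \<Rightarrow> word set" where
  "centralizer_words m g = {w. artin_eq m (w @ g) (g @ w)}"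

end

theory Submission
  imports Defs
begin


lemma inv_letter_inv[simp]: "inv_letter (inv_letter x) = x"
  by (cases x) (simp add: inv_letter_def)

lemma inv_word_Nil[simp]: "inv_word [] = []"
  and inv_word_Cons: "inv_word (x # w) = inv_word w @ [inv_letter x]"
  and inv_word_append[simp]: "inv_word (u @ v) = inv_word v @ inv_word u"
  and inv_word_inv[simp]: "inv_word (inv_word u) = u"
  by (simp_all add: inv_word_def rev_map[symmetric] map_map comp_def)

lemma inv_word_single[simp]: "inv_word [x] = [inv_letter x]"
  by (simp add: inv_word_def)

lemma ae_refl[simp, intro]: "artin_eq m w w" by (rule artin_eq.refl)

lemma ae_app: "artin_eq m u u' \<Longrightarrow> artin_eq m v v' \<Longrightarrow> artin_eq m (u @ v) (u' @ v')"
proof -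
  assume 1: "artin_eq m u u'" and 2: "artin_eq m v v'"
  have "artin_eq m ([] @ u @ v) ([] @ u' @ v)" by (rule artin_eq.cong[OF 1])
  moreover have "artin_eq m (u' @ v @ []) (u' @ v' @ [])" by (rule artin_eq.cong[OF 2])
  ultimately show ?thesis using artin_eq.trans by fastforce
qed

lemma ae_trans: "artin_eq m u v \<Longrightarrow> artin_eq m v w \<Longrightarrow> artin_eq m u w"
  by (rule artin_eq.trans)
lemma ae_sym: "artin_eq m u v \<Longrightarrow> artin_eq m v u"
  by (rule artin_eq.sym)

lemmas [trans] = ae_trans

lemma ae_appL: "artin_eq m v v' \<Longrightarrow> artin_eq m (u @ v) (u @ v')"
  by (rule ae_app) auto
lemma ae_appR: "artin_eq m u u' \<Longrightarrow> artin_eq m (u @ v) (u' @ v)"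
  by (rule ae_app) auto

lemma ae_cancel2: "artin_eq m [inv_letter x, x] []"
  using artin_eq.cancel[of m "inv_letter x"] by simp

lemma ae_inv_r: "artin_eq m (u @ inv_word u) []"
proof (induction u)
  case Nil then show ?case by simp
next
  case (Cons x u)
  have "x # u @ inv_word u @ [inv_letter x] = [x] @ (u @ inv_word u) @ [inv_letter x]" by simp
  moreover have "artin_eq m ([x] @ (u @ inv_word u) @ [inv_letter x]) ([x] @ [] @ [inv_letter x])"
    by (rule artin_eq.cong[OF Cons.IH])
  ultimately show ?case using artin_eq.cancel[of m x] by (auto simp: inv_word_Cons intro: ae_trans)
qed

lemma ae_inv_l: "artin_eq m (inv_word u @ u) []"
  using ae_inv_r[of m "inv_word u"] by simp

lemma ae_cancel_l: "artin_eq m (x @ u) (x @ v) \<Longrightarrow> artin_eq m u v"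
proof -
  assume h: "artin_eq m (x @ u) (x @ v)"
  have "artin_eq m u (inv_word x @ x @ u)"
    using ae_appR[OF ae_inv_l[of m x], of u] by (auto intro: ae_sym)
  moreover have "artin_eq m (inv_word x @ x @ u) (inv_word x @ x @ v)" using ae_appL[OF h] by simp
  moreover have "artin_eq m (inv_word x @ x @ v) v"
    using ae_appR[OF ae_inv_l[of m x], of v] by simp
  ultimately show ?thesis by (blast intro: ae_trans)
qed

lemma ae_cancel_r: "artin_eq m (u @ x) (v @ x) \<Longrightarrow> artin_eq m u v"
proof -
  assume h: "artin_eq m (u @ x) (v @ x)"
  have "artin_eq m u (u @ x @ inv_word x)"
    using ae_appL[OF ae_inv_r[of m x], of u] by (auto intro: ae_sym)
  moreover have "artin_eq m (u @ x @ inv_word x) (v @ x @ inv_word x)" using ae_appR[OF h] by simp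
  moreover have "artin_eq m (v @ x @ inv_word x) v"
    using ae_appL[OF ae_inv_r[of m x], of v] by simp
  ultimately show ?thesis by (blast intro: ae_trans)
qed

lemma ae_inv: "artin_eq m u v \<Longrightarrow> artin_eq m (inv_word u) (inv_word v)"
proof -
  assume h: "artin_eq m u v"
  have "artin_eq m (inv_word u @ u @ inv_word v) (inv_word u @ v @ inv_word v)"
    using ae_appL[OF ae_appR[OF h]] by simp
  moreover have "artin_eq m (inv_word u @ u @ inv_word v) (inv_word v)"
    using ae_appR[OF ae_inv_l[of m u], of "inv_word v"] by simp
  moreover have "artin_eq m (inv_word u @ v @ inv_word v) (inv_word u)"
    using ae_appL[OF ae_inv_r[of m v], of "inv_word u"] by simp
  ultimately show ?thesis by (blast intro: ae_trans ae_sym)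
qed

lemma wp_nonneg: "0 \<le> k \<Longrightarrow> word_pow w k = concat (replicate (nat k) w)"
  by (simp add: word_pow_def)
lemma wp_neg: "k < 0 \<Longrightarrow> word_pow w k = concat (replicate (nat (-k)) (inv_word w))"
  by (simp add: word_pow_def)
lemma wp_0[simp]: "word_pow w 0 = []" by (simp add: word_pow_def)
lemma wp_1[simp]: "word_pow w 1 = w" by (simp add: word_pow_def)
lemma wp_of_nat[simp]: "word_pow w (int n) = concat (replicate n w)" by (simp add: word_pow_def)


lemma concat_rep_snoc: "concat (replicate (Suc n) w) = concat (replicate n w) @ w"
  by (induction n) auto

lemma concat_rep_comm: "w @ concat (replicate n w) = concat (replicate n w) @ w"
  using concat_rep_snoc[of n w] by simp

lemma concat_rep_inv: "inv_word (concat (replicate n w)) = concat (replicate n (inv_word w))"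
proof (induction n)
  case (Suc n) then show ?case by (simp only: concat_rep_snoc inv_word_append) (simp add: concat_rep_comm)
qed simp

lemma inv_wp: "inv_word (word_pow w k) = word_pow w (-k)"
  by (cases "k < 0") (auto simp: word_pow_def concat_rep_inv)


lemma wp_succ: "artin_eq m (word_pow w (k + 1)) (word_pow w k @ w)"
proof (cases "k < 0")
  case True
  define n where "n = nat (-(k+1))"
  have n: "nat (-k) = Suc n" "nat (-(k+1)) = n" using True by (auto simp: n_def)
  have "word_pow w (k+1) = concat (replicate n (inv_word w))"
    using True n by (cases "k + 1 < 0") (auto simp: word_pow_def)
  moreover have "word_pow w k @ w = concat (replicate n (inv_word w)) @ inv_word w @ w"
    using True n by (simp add: word_pow_def concat_rep_comm)
  ultimately show ?thesis using ae_appL[OF ae_inv_l[of m w]] by (auto intro: ae_sym)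
next
  case False
  then have "nat (k+1) = Suc (nat k)" by simp
  then show ?thesis using False by (simp add: word_pow_def concat_rep_comm)
qed

lemma wp_pred: "artin_eq m (word_pow w (k - 1)) (word_pow w k @ inv_word w)"
proof -
  have "artin_eq m (word_pow (inv_word w) ((-k) + 1)) (word_pow (inv_word w) (-k) @ inv_word w)"
    by (rule wp_succ)
  moreover have "\<And>j. word_pow (inv_word w) j = word_pow w (-j)"
    by (simp add: word_pow_def)
  ultimately show ?thesis by simp
qed

lemma wp_add: "artin_eq m (word_pow w i @ word_pow w j) (word_pow w (i + j))"
proof (induction j rule: int_induct[where k=0])
  case base then show ?case by simp
next
  case (step1 j)
  have "artin_eq m (word_pow w i @ word_pow w (j+1)) (word_pow w i @ word_pow w j @ w)"
    using ae_appL[OF wp_succ] by simp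
  also have "artin_eq m (word_pow w i @ word_pow w j @ w) (word_pow w (i + j) @ w)"
    using ae_appR[OF step1.IH] by simp
  also have "artin_eq m (word_pow w (i + j) @ w) (word_pow w (i + (j + 1)))"
    using wp_succ[of m w "i+j"] by (simp add: ae_sym add.assoc)
  finally show ?case .
next
  case (step2 j)
  have "artin_eq m (word_pow w i @ word_pow w (j-1)) (word_pow w i @ word_pow w j @ inv_word w)"
    using ae_appL[OF wp_pred] by simp
  also have "artin_eq m (word_pow w i @ word_pow w j @ inv_word w) (word_pow w (i + j) @ inv_word w)"
    using ae_appR[OF step2.IH] by simp
  also have "artin_eq m (word_pow w (i + j) @ inv_word w) (word_pow w (i + (j - 1)))"
    using wp_pred[of m w "i+j"] by (simp add: ae_sym algebra_simps)
  finally show ?case .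
qed


lemma Pi_snoc: "Pi s t (Suc n) = Pi s t n @ [(if even n then s else t, True)]"
  by (induction n arbitrary: s t) auto

lemma Pi_even: "Pi s t (2 * k) = concat (replicate k [(s, True), (t, True)])"
  by (induction k arbitrary: s t) auto

lemma Pi_odd: "Pi s t (2 * k + 1) = concat (replicate k [(s, True), (t, True)]) @ [(s, True)]"
  using Pi_snoc[of s t "2*k"] by (simp add: Pi_even del: Pi.simps)

definition comm :: "nat \<Rightarrow> word \<Rightarrow> word \<Rightarrow> bool" where
  "comm m u v \<longleftrightarrow> artin_eq m (u @ v) (v @ u)"

lemma comm_Nil[simp]: "comm m u []" by (simp add: comm_def)

lemma comm_app2: "comm m u v1 \<Longrightarrow> comm m u v2 \<Longrightarrow> comm m u (v1 @ v2)"
proof -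
  assume 1: "comm m u v1" and 2: "comm m u v2"
  have "artin_eq m (u @ v1 @ v2) (v1 @ u @ v2)" using ae_appR[OF 1[unfolded comm_def]] by simp
  also have "artin_eq m (v1 @ u @ v2) (v1 @ v2 @ u)" using ae_appL[OF 2[unfolded comm_def]] by simp
  finally show ?thesis by (simp add: comm_def)
qed

lemma comm_sym: "comm m u v \<Longrightarrow> comm m v u"
  by (simp add: comm_def ae_sym)

lemma comm_inv: "comm m u v \<Longrightarrow> comm m u (inv_word v)"
proof -
  assume 1: "comm m u v"
  have "artin_eq m (u @ inv_word v) (inv_word v @ v @ u @ inv_word v)"
    using ae_appR[OF ae_inv_l[of m v], of "u @ inv_word v"] by (simp add: ae_sym)
  also have "artin_eq m (inv_word v @ v @ u @ inv_word v) (inv_word v @ u @ v @ inv_word v)"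
    using ae_appL[OF ae_appR[OF 1[unfolded comm_def, THEN ae_sym]], of "inv_word v" "inv_word v"] by simp
  also have "artin_eq m (inv_word v @ u @ v @ inv_word v) (inv_word v @ u)"
    using ae_appL[OF ae_inv_r[of m v], of "inv_word v @ u"] by simp
  finally show ?thesis by (simp add: comm_def)
qed

lemma comm_concat_rep: "comm m u v \<Longrightarrow> comm m u (concat (replicate n v))"
  by (induction n) (auto intro: comm_app2)

lemma comm_wp: "comm m u v \<Longrightarrow> comm m u (word_pow v k)"
  by (cases "k < 0") (auto simp: word_pow_def intro: comm_concat_rep comm_inv)

lemma comm_all: "(\<And>x. comm m u [x]) \<Longrightarrow> comm m u w"
proof (induction w)
  case (Cons x w)
  then show ?case using comm_app2[of m u "[x]" w] by simp
qed simp

context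
  fixes m :: nat
  assumes m2: "2 \<le> m"
begin

lemma Delta_letter: "artin_eq m ([(g, True)] @ Delta m) (Delta m @ [(g \<noteq> odd m, True)])"
proof (cases g)
  case True
  have "[(True, True)] @ Delta m = Pi True False (Suc m)" by (simp add: Delta_def)
  also have "\<dots> = Pi True False m @ [(True \<noteq> odd m, True)]" by (simp only: Pi_snoc) simp
  finally show ?thesis using True ae_appR[OF artin_eq.braid[of m], of "[(True \<noteq> odd m, True)]"]
    by (simp add: Delta_def ae_sym)
next
  case False
  have "artin_eq m ([(False, True)] @ Delta m) ([(False, True)] @ Pi True False m)"
    using ae_appL[OF artin_eq.braid[of m], of "[(False, True)]"] by (simp add: Delta_def)
  also have "[(False, True)] @ Pi True False m = Pi False True (Suc m)" by simp
  also have "\<dots> = Delta m @ [(False \<noteq> odd m, True)]" by (simp only: Pi_snoc Delta_def) simp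
  finally show ?thesis using False by simp
qed

lemma delta_pos: "comm m (delta m) [(g, True)]"
proof (cases "odd m")
  case True
  have "artin_eq m ([(g, True)] @ Delta m @ Delta m) (Delta m @ [(\<not> g, True)] @ Delta m)"
    using ae_appR[OF Delta_letter[of g], of "Delta m"] True by simp
  also have "artin_eq m (Delta m @ [(\<not> g, True)] @ Delta m) (Delta m @ Delta m @ [(g, True)])"
    using ae_appL[OF Delta_letter[of "\<not> g"], of "Delta m"] True by simp
  finally show ?thesis using True by (simp add: comm_def delta_def ae_sym)
next
  case False
  then show ?thesis using Delta_letter[of g] by (simp add: comm_def delta_def ae_sym)
qed

lemma delta_letter: "comm m (delta m) [x]"
proof (cases x)
  case (Pair g s)
  show ?thesis
  proof (cases s)
    case True then show ?thesis using Pair delta_pos by simp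
  next
    case False
    have "comm m (delta m) (inv_word [(g, True)])" by (rule comm_inv[OF delta_pos])
    then show ?thesis using Pair False by (simp add: inv_letter_def)
  qed
qed

lemma delta_central: "comm m (delta m) w"
  by (rule comm_all) (rule delta_letter)

lemma delta_pow_central: "comm m (word_pow (delta m) k) w"
  by (rule comm_sym, rule comm_wp, rule comm_sym, rule delta_central)

end


lemma divmod_char: "0 \<le> (r::int) \<Longrightarrow> r < q \<Longrightarrow> x = q * d + r \<Longrightarrow> x div q = d \<and> x mod q = r"
  by (simp add: add.commute)
lemma arA: "0 < (q::int) \<Longrightarrow> x mod q + 1 = q \<Longrightarrow> (x+1) div q = x div q + 1 \<and> (x+1) mod q = 0"
proof (rule divmod_char)
  assume "x mod q + 1 = q" "0 < q"
  moreover have "q * (x div q) + x mod q = x" by (rule mult_div_mod_eq)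
  moreover have "q * (x div q + 1) = q * (x div q) + q" by (simp add: algebra_simps)
  ultimately show "x + 1 = q * (x div q + 1) + 0" by linarith
qed auto
lemma arA2: "0 < (q::int) \<Longrightarrow> x mod q + 1 \<noteq> q \<Longrightarrow> (x+1) div q = x div q \<and> (x+1) mod q = x mod q + 1"
proof (rule divmod_char)
  assume "x mod q + 1 \<noteq> q" "0 < q"
  then show "x mod q + 1 < q" using pos_mod_bound[of q x] by linarith
  have "q * (x div q) + x mod q = x" by (rule mult_div_mod_eq)
  then show "x + 1 = q * (x div q) + (x mod q + 1)" by (simp add: algebra_simps)
qed (simp add: pos_mod_sign add_nonneg_nonneg)
lemma arB: "0 < (q::int) \<Longrightarrow> x mod q = 0 \<Longrightarrow> (x - 1) div q = x div q - 1 \<and> (x - 1) mod q = q - 1"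
proof (rule divmod_char)
  assume "x mod q = 0" "0 < q"
  moreover have "q * (x div q) + x mod q = x" by (rule mult_div_mod_eq)
  moreover have "q * (x div q - 1) = q * (x div q) - q" by (simp add: algebra_simps)
  ultimately show "x - 1 = q * (x div q - 1) + (q - 1)" by linarith
qed auto
lemma arB2: "0 < (q::int) \<Longrightarrow> x mod q \<noteq> 0 \<Longrightarrow> (x - 1) div q = x div q \<and> (x - 1) mod q = x mod q - 1"
proof (rule divmod_char)
  assume "x mod q \<noteq> 0" "0 < q"
  then show "0 \<le> x mod q - 1" using pos_mod_sign[of q x] by linarith
  have "q * (x div q) + x mod q = x" by (rule mult_div_mod_eq)
  then show "x - 1 = q * (x div q) + (x mod q - 1)" by (simp add: algebra_simps)
  show "x mod q - 1 < q" using pos_mod_bound[of q x] \<open>0 < q\<close> by linarith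
qed

type_synonym state = "int \<times> int list"

fun Rx :: "int \<Rightarrow> state \<Rightarrow> state" where
  "Rx q (N, L) = (if last L + 1 = q then (N + 1, butlast L @ [0]) else (N, butlast L @ [last L + 1]))"
fun Rxi :: "int \<Rightarrow> state \<Rightarrow> state" where
  "Rxi q (N, L) = (if last L = 0 then (N - 1, butlast L @ [q - 1]) else (N, butlast L @ [last L - 1]))"
fun Ry :: "int \<Rightarrow> state \<Rightarrow> state" where
  "Ry p (N, L) = (if 3 \<le> length L \<and> last L = 0 then
     (if 0 < p \<and> last (butlast L) + 1 = p then (N + 1, butlast (butlast L))
      else if last (butlast L) + 1 = 0 then (N, butlast (butlast L))
      else (N, butlast (butlast L) @ [last (butlast L) + 1, 0]))
   else (N, L @ [1, 0]))"
fun Ryi :: "int \<Rightarrow> state \<Rightarrow> state" where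
  "Ryi p (N, L) = (if 3 \<le> length L \<and> last L = 0 then
     (if last (butlast L) - 1 = 0 then (N, butlast (butlast L))
      else (N, butlast (butlast L) @ [last (butlast L) - 1, 0]))
   else if 0 < p then (N - 1, L @ [p - 1, 0]) else (N, L @ [-1, 0]))"
fun Ly :: "int \<Rightarrow> state \<Rightarrow> state" where
  "Ly p (N, L) = (if 3 \<le> length L \<and> hd L = 0 then
     (if 0 < p \<and> L!1 + 1 = p then (N + 1, drop 2 L)
      else if L!1 + 1 = 0 then (N, drop 2 L)
      else (N, 0 # (L!1 + 1) # drop 2 L))
   else (N, 0 # 1 # L))"
fun Lxi :: "int \<Rightarrow> state \<Rightarrow> state" where
  "Lxi q (N, L) = (if hd L = 0 then (N - 1, (q - 1) # tl L) else (N, (hd L - 1) # tl L))"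

definition vx :: "int \<Rightarrow> int \<Rightarrow> bool" where "vx q f \<longleftrightarrow> 0 \<le> f \<and> f < q"
definition vy :: "int \<Rightarrow> int \<Rightarrow> bool" where "vy p e \<longleftrightarrow> e \<noteq> 0 \<and> (0 < p \<longrightarrow> 0 < e \<and> e < p)"

fun vl :: "int \<Rightarrow> int \<Rightarrow> int list \<Rightarrow> bool" where
  "vl q p [] = False"
| "vl q p [f] = vx q f"
| "vl q p (f # e # L) = (vx q f \<and> vy p e \<and> vl q p L \<and> (1 < length L \<longrightarrow> hd L \<noteq> 0))"

lemma vl_odd: "vl q p L \<Longrightarrow> odd (length L)"
  by (induction q p L rule: vl.induct) auto

lemma vl_snoc: "vl q p (L @ [e, f]) \<longleftrightarrow> vl q p L \<and> vy p e \<and> vx q f \<and> (1 < length L \<longrightarrow> last L \<noteq> 0)"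
proof (induction q p L rule: vl.induct)
  case (3 q p g h L)
  show ?case
  proof (cases L)
    case Nil then show ?thesis by simp
  next
    case (Cons a L')
    then show ?thesis using 3 by (cases L') auto
  qed
qed auto

lemma vl_last_change: "vl q p (B @ [f]) \<Longrightarrow> vx q f' \<Longrightarrow> vl q p (B @ [f'])"
proof (induction q p B rule: vl.induct)
  case (3 q p g h L)
  then show ?case by (cases L) auto
qed auto

lemma vl_hd_change: "vl q p (f # T) \<Longrightarrow> vx q f' \<Longrightarrow> vl q p (f' # T)"
  by (cases T) auto

lemma snoc2: "2 \<le> length L \<Longrightarrow> \<exists>B e f. L = B @ [e, f]"
proof -
  assume "2 \<le> length L"
  then obtain L1 f where 1: "L = L1 @ [f]" by (cases L rule: rev_cases) auto
  with \<open>2 \<le> length L\<close> obtain B e where "L1 = B @ [e]" by (cases L1 rule: rev_cases) auto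
  with 1 show ?thesis by auto
qed

lemma cons2: "2 \<le> length L \<Longrightarrow> \<exists>x y T. L = x # y # T"
  by (cases L; cases "tl L") auto

lemma snoc1: "L \<noteq> [] \<Longrightarrow> \<exists>B f. L = B @ [f]"
  by (cases L rule: rev_cases) auto

lemma vl_cases: "vl q p L \<Longrightarrow> (\<exists>f. L = [f] \<and> vx q f) \<or> (\<exists>B e f. L = B @ [e, f] \<and> 3 \<le> length L)"
proof -
  assume v: "vl q p L"
  then have o: "odd (length L)" by (rule vl_odd)
  show ?thesis
  proof (cases "length L = 1")
    case True
    then obtain f where "L = [f]" by (cases L) auto
    then show ?thesis using v by auto
  next
    case False
    with o have "3 \<le> length L" by presburger
    then show ?thesis using snoc2[of L] by auto
  qed
qed

lemma vl_len3: "vl q p L \<Longrightarrow> 1 < length L \<Longrightarrow> 3 \<le> length L"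
proof -
  assume "vl q p L" "1 < length L"
  moreover from \<open>vl q p L\<close> have "odd (length L)" by (rule vl_odd)
  ultimately show ?thesis by presburger
qed

lemma bl2[simp]: "butlast (B @ [e, f]) = B @ [e]"
  by (simp add: butlast_append)
lemma last2[simp]: "last (B @ [e, f]) = f"
  by simp

lemma vl_last: "vl q p (B @ [f]) \<Longrightarrow> vx q f"
proof (cases B rule: rev_cases)
  case Nil then show "vl q p (B @ [f]) \<Longrightarrow> vx q f" by simp
next
  case (snoc B' e) then show "vl q p (B @ [f]) \<Longrightarrow> vx q f" using vl_snoc[of q p B' e f] by simp
qed

lemma vl_hd: "vl q p (f # T) \<Longrightarrow> vx q f"
  by (cases T) auto

lemma Rx_eq: "Rx q (N, B @ [f]) = (if f + 1 = q then (N + 1, B @ [0]) else (N, B @ [f + 1]))"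
  by simp
lemma Rxi_eq: "Rxi q (N, B @ [f]) = (if f = 0 then (N - 1, B @ [q - 1]) else (N, B @ [f - 1]))"
  by simp
lemma Lxi_eq: "Lxi q (N, f # T) = (if f = 0 then (N - 1, (q - 1) # T) else (N, (f - 1) # T))"
  by simp

lemma Ry_merge: "1 \<le> length B \<Longrightarrow> Ry p (N, B @ [e, 0]) = (if 0 < p \<and> e + 1 = p then (N + 1, B)
      else if e + 1 = 0 then (N, B) else (N, B @ [e + 1, 0]))"
  by simp

lemma Ryi_merge: "1 \<le> length B \<Longrightarrow> Ryi p (N, B @ [e, 0]) = (if e - 1 = 0 then (N, B) else (N, B @ [e - 1, 0]))"
  by simp

context
  fixes q p :: int
  assumes q0: "0 < q" and pp: "p = 0 \<or> 2 \<le> p"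
begin

lemma vl_Rx: "vl q p L \<Longrightarrow> vl q p (snd (Rx q (N, L)))"
proof -
  assume v: "vl q p L"
  then have "L \<noteq> []" by auto
  then obtain B f where L: "L = B @ [f]" using snoc1 by blast
  have f: "vx q f" using v unfolding L by (rule vl_last)
  have a: "vl q p (B @ [0])" using vl_last_change[of q p B f 0] v L q0 by (simp add: vx_def)
  have b: "vl q p (B @ [f + 1])" if "f + 1 \<noteq> q"
    using vl_last_change[of q p B f "f+1"] v L f that by (simp add: vx_def)
  show ?thesis unfolding L Rx_eq using a b by simp
qed

lemma vl_Rxi: "vl q p L \<Longrightarrow> vl q p (snd (Rxi q (N, L)))"
proof -
  assume v: "vl q p L"
  then have "L \<noteq> []" by auto
  then obtain B f where L: "L = B @ [f]" using snoc1 by blast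
  have f: "vx q f" using v unfolding L by (rule vl_last)
  have a: "vl q p (B @ [q - 1])" using vl_last_change[of q p B f "q - 1"] v L q0 by (simp add: vx_def)
  have b: "vl q p (B @ [f - 1])" if "f \<noteq> 0"
    using vl_last_change[of q p B f "f - 1"] v L f that by (simp add: vx_def)
  show ?thesis unfolding L Rxi_eq using a b by simp
qed

lemma vl_Lxi: "vl q p L \<Longrightarrow> vl q p (snd (Lxi q (N, L)))"
proof -
  assume v: "vl q p L"
  then have "L \<noteq> []" by auto
  then obtain f T where L: "L = f # T" by (cases L) auto
  have f: "vx q f" using v unfolding L by (rule vl_hd)
  have a: "vl q p ((q - 1) # T)" using vl_hd_change[of q p f T "q - 1"] v L q0 by (simp add: vx_def)
  have b: "vl q p ((f - 1) # T)" if "f \<noteq> 0"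
    using vl_hd_change[of q p f T "f - 1"] v L f that by (simp add: vx_def)
  show ?thesis unfolding L Lxi_eq using a b by simp
qed

lemma vl_Ry: "vl q p L \<Longrightarrow> vl q p (snd (Ry p (N, L)))"
proof -
  assume v: "vl q p L"
  show ?thesis
  proof (cases "3 \<le> length L \<and> last L = 0")
    case True
    then obtain B e where L: "L = B @ [e, 0]" using snoc2[of L] by fastforce
    have vB: "vl q p B" "vy p e" "1 < length B \<longrightarrow> last B \<noteq> 0" using v L vl_snoc by auto
    have lB: "1 \<le> length B" using True L by auto
    have ve: "vy p (e + 1)" if "\<not> (0 < p \<and> e + 1 = p)" "e + 1 \<noteq> 0"
      using that vB(2) by (auto simp: vy_def)
    show ?thesis unfolding L Ry_merge[OF lB]
      using vB ve q0 by (simp add: vl_snoc vx_def)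
  next
    case False
    then have "1 < length L \<longrightarrow> last L \<noteq> 0" using vl_len3[OF v] by auto
    moreover have "Ry p (N, L) = (N, L @ [1, 0])" by (simp only: Ry.simps if_not_P[OF False] if_False)
    moreover have "vy p 1" using pp by (auto simp: vy_def)
    ultimately show ?thesis using v q0 by (simp add: vx_def vl_snoc)
  qed
qed

lemma vl_Ryi: "vl q p L \<Longrightarrow> vl q p (snd (Ryi p (N, L)))"
proof -
  assume v: "vl q p L"
  show ?thesis
  proof (cases "3 \<le> length L \<and> last L = 0")
    case True
    then obtain B e where L: "L = B @ [e, 0]" using snoc2[of L] by fastforce
    have vB: "vl q p B" "vy p e" "1 < length B \<longrightarrow> last B \<noteq> 0" using v L vl_snoc by auto
    have lB: "1 \<le> length B" using True L by auto
    have ve: "vy p (e - 1)" if "e - 1 \<noteq> 0"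
      using that vB(2) by (auto simp: vy_def)
    show ?thesis unfolding L Ryi_merge[OF lB]
      using vB ve q0 by (simp add: vl_snoc vx_def)
  next
    case False
    then have "1 < length L \<longrightarrow> last L \<noteq> 0" using vl_len3[OF v] by auto
    moreover have "Ryi p (N, L) = (if 0 < p then (N - 1, L @ [p - 1, 0]) else (N, L @ [-1, 0]))"
      by (simp only: Ryi.simps if_not_P[OF False] if_False)
    moreover have "vy p (p - 1)" if "0 < p" using pp that by (auto simp: vy_def)
    moreover have "vy p (-1)" if "\<not> 0 < p" using pp that by (auto simp: vy_def)
    ultimately show ?thesis using v q0 by (simp add: vx_def vl_snoc)
  qed
qed

lemma vl_Ly: "vl q p L \<Longrightarrow> vl q p (snd (Ly p (N, L)))"
proof -
  assume v: "vl q p L"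
  show ?thesis
  proof (cases "3 \<le> length L \<and> hd L = 0")
    case True
    then obtain x e T where L0: "L = x # e # T" using cons2[of L] by auto
    with True have L: "L = 0 # e # T" by simp
    have f: "vy p e" "vl q p T" "1 < length T \<longrightarrow> hd T \<noteq> 0" using v L by auto
    have "T \<noteq> []" using f(2) by auto
    then have "1 \<le> length T" by (cases T) auto
    have lyeq: "Ly p (N, L) = (if 0 < p \<and> e + 1 = p then (N + 1, T)
      else if e + 1 = 0 then (N, T) else (N, 0 # (e + 1) # T))" using L \<open>1 \<le> length T\<close> by simp
    show ?thesis unfolding lyeq using f q0 pp by (auto simp add: vy_def vx_def)
  next
    case False
    then have "1 < length L \<longrightarrow> hd L \<noteq> 0" using vl_len3[OF v] by auto
    moreover have lyeq: "Ly p (N, L) = (N, 0 # 1 # L)" by (simp only: Ly.simps if_not_P[OF False] if_False)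
    moreover have "vy p 1" using pp by (auto simp: vy_def)
    ultimately show ?thesis unfolding lyeq using v q0 by (simp add: vx_def)
  qed
qed

end


definition shiftS :: "int \<Rightarrow> state \<Rightarrow> state" where "shiftS k S = (fst S + k, snd S)"

lemma shiftS_pair[simp]: "shiftS k (N, L) = (N + k, L)" by (simp add: shiftS_def)
lemma shiftS_0[simp]: "shiftS 0 S = S" by (simp add: shiftS_def)
lemma shiftS_shiftS[simp]: "shiftS k (shiftS l S) = shiftS (k + l) S" by (simp add: shiftS_def algebra_simps)

lemma Rx_shift: "Rx q (shiftS k S) = shiftS k (Rx q S)"
  by (cases S) (simp add: algebra_simps)
lemma Rxi_shift: "Rxi q (shiftS k S) = shiftS k (Rxi q S)"
  by (cases S) (simp add: algebra_simps)
lemma Ry_shift: "Ry p (shiftS k S) = shiftS k (Ry p S)"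
  by (cases S) (simp add: algebra_simps Let_def)
lemma Ryi_shift: "Ryi p (shiftS k S) = shiftS k (Ryi p S)"
  by (cases S) (simp add: algebra_simps)
lemma Ly_shift: "Ly p (shiftS k S) = shiftS k (Ly p S)"
  by (cases S) (simp add: algebra_simps)
lemma Lxi_shift: "Lxi q (shiftS k S) = shiftS k (Lxi q S)"
  by (cases S) (simp add: algebra_simps)

lemma funpow_shift: "(\<And>S. f (shiftS k S) = shiftS k (f S)) \<Longrightarrow> (f ^^ n) (shiftS k S) = shiftS k ((f ^^ n) S)"
  by (induction n) auto

context
  fixes q p :: int
  assumes q0: "0 < q" and pp: "p = 0 \<or> 2 \<le> p"
begin

lemma Rx_Rxi: "vl q p L \<Longrightarrow> Rx q (Rxi q (N, L)) = (N, L)"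
proof -
  assume v: "vl q p L"
  then have "L \<noteq> []" by auto
  then obtain B f where L: "L = B @ [f]" using snoc1 by blast
  have f: "vx q f" using v unfolding L by (rule vl_last)
  show ?thesis unfolding L Rxi_eq using f by (auto simp: vx_def)
qed

lemma Rxi_Rx: "vl q p L \<Longrightarrow> Rxi q (Rx q (N, L)) = (N, L)"
proof -
  assume v: "vl q p L"
  then have "L \<noteq> []" by auto
  then obtain B f where L: "L = B @ [f]" using snoc1 by blast
  have f: "vx q f" using v unfolding L by (rule vl_last)
  show ?thesis unfolding L Rx_eq using f by (auto simp: vx_def)
qed

lemma Ryi_Ry: "vl q p L \<Longrightarrow> Ryi p (Ry p (N, L)) = (N, L)"
proof -
  assume v: "vl q p L"
  show ?thesis
  proof (cases "3 \<le> length L \<and> last L = 0")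
    case True
    then obtain B e where L: "L = B @ [e, 0]" using snoc2[of L] by fastforce
    have vB: "vl q p B" "vy p e" "1 < length B \<longrightarrow> last B \<noteq> 0" using v L vl_snoc by auto
    have lB: "1 \<le> length B" using True L by auto
    have nB: "\<not> (3 \<le> length B \<and> last B = 0)" using vB(3) by auto
    have r1: "Ryi p (N, B) = (if 0 < p then (N - 1, B @ [p - 1, 0]) else (N, B @ [-1, 0]))"
      by (simp only: Ryi.simps if_not_P[OF nB] if_False)
    show ?thesis unfolding L Ry_merge[OF lB]
      using vB(2) pp r1 lB by (auto simp: vy_def Ryi_merge)
  next
    case False
    then have r: "Ry p (N, L) = (N, L @ [1, 0])" by (simp only: Ry.simps if_not_P[OF False] if_False)
    have "1 \<le> length L" using v by (cases L) auto
    then show ?thesis unfolding r using Ryi_merge[of L] by simp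
  qed
qed

lemma Ry_Ryi: "vl q p L \<Longrightarrow> Ry p (Ryi p (N, L)) = (N, L)"
proof -
  assume v: "vl q p L"
  show ?thesis
  proof (cases "3 \<le> length L \<and> last L = 0")
    case True
    then obtain B e where L: "L = B @ [e, 0]" using snoc2[of L] by fastforce
    have vB: "vl q p B" "vy p e" "1 < length B \<longrightarrow> last B \<noteq> 0" using v L vl_snoc by auto
    have lB: "1 \<le> length B" using True L by auto
    have nB: "\<not> (3 \<le> length B \<and> last B = 0)" using vB(3) by auto
    have r1: "Ry p (N, B) = (N, B @ [1, 0])"
      by (simp only: Ry.simps if_not_P[OF nB] if_False)
    show ?thesis unfolding L Ryi_merge[OF lB]
      using vB(2) pp r1 lB by (auto simp: vy_def Ry_merge)
  next
    case False
    then have r: "Ryi p (N, L) = (if 0 < p then (N - 1, L @ [p - 1, 0]) else (N, L @ [-1, 0]))"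
      by (simp only: Ryi.simps if_not_P[OF False] if_False)
    have "1 \<le> length L" using v by (cases L) auto
    then show ?thesis unfolding r using Ry_merge[of L] by simp
  qed
qed

lemma Rx_pow: "vx q f \<Longrightarrow> (Rx q ^^ j) (N, B @ [f]) = (N + (f + int j) div q, B @ [(f + int j) mod q])"
proof (induction j)
  case 0 then show ?case by (simp add: vx_def)
next
  case (Suc j)
  let ?x = "f + int j"
  show ?case
  proof (cases "?x mod q + 1 = q")
    case True
    then show ?thesis using Suc arA[OF q0 True] by (simp add: algebra_simps)
  next
    case False
    then show ?thesis using Suc arA2[OF q0 False] by (simp add: algebra_simps)
  qed
qed

lemma Rxi_pow: "vx q f \<Longrightarrow> (Rxi q ^^ j) (N, B @ [f]) = (N + (f - int j) div q, B @ [(f - int j) mod q])"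
proof (induction j)
  case 0 then show ?case by (simp add: vx_def)
next
  case (Suc j)
  let ?x = "f - int j"
  show ?case
  proof (cases "?x mod q = 0")
    case True
    then show ?thesis using Suc arB[OF q0 True] by (simp add: algebra_simps)
  next
    case False
    then show ?thesis using Suc arB2[OF q0 False] by (simp add: algebra_simps)
  qed
qed

lemma Lxi_pow: "vx q f \<Longrightarrow> (Lxi q ^^ j) (N, f # T) = (N + (f - int j) div q, ((f - int j) mod q) # T)"
proof (induction j)
  case 0 then show ?case by (simp add: vx_def)
next
  case (Suc j)
  let ?x = "f - int j"
  show ?case
  proof (cases "?x mod q = 0")
    case True
    then show ?thesis using Suc arB[OF q0 True] by (simp add: algebra_simps)
  next
    case False
    then show ?thesis using Suc arB2[OF q0 False] by (simp add: algebra_simps)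
  qed
qed

end


definition qq :: "nat \<Rightarrow> int" where "qq m = (if odd m then int m else int (m div 2))"
definition pp :: "nat \<Rightarrow> int" where "pp m = (if odd m then 2 else 0)"
definition cc :: "nat \<Rightarrow> nat" where "cc m = (if odd m then m div 2 else 0)"
definition Yw :: "nat \<Rightarrow> word" where "Yw m = (if odd m then Delta m else [(False, True)])"
definition Xw :: word where "Xw = [(False, True), (True, True)]"

definition actR :: "nat \<Rightarrow> letter \<Rightarrow> state \<Rightarrow> state" where
  "actR m x S = (if snd x then
      (if fst x then (Rx (qq m) ^^ (cc m + 1)) (Ryi (pp m) S) else Ry (pp m) ((Rxi (qq m) ^^ cc m) S))
    else
      (if fst x then Ry (pp m) ((Rxi (qq m) ^^ (cc m + 1)) S) else (Rx (qq m) ^^ cc m) (Ryi (pp m) S)))"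

definition actw :: "nat \<Rightarrow> word \<Rightarrow> state \<Rightarrow> state" where
  "actw m w S = fold (actR m) w S"

definition phi :: "nat \<Rightarrow> word \<Rightarrow> state" where
  "phi m w = actw m w (0, [0])"

lemma actw_Nil[simp]: "actw m [] S = S" by (simp add: actw_def)
lemma actw_Cons[simp]: "actw m (x # w) S = actw m w (actR m x S)" by (simp add: actw_def)
lemma actw_append[simp]: "actw m (u @ v) S = actw m v (actw m u S)" by (simp add: actw_def)
lemma phi_append: "phi m (u @ v) = actw m v (phi m u)" by (simp add: phi_def)

definition vs :: "nat \<Rightarrow> state \<Rightarrow> bool" where "vs m S \<longleftrightarrow> vl (qq m) (pp m) (snd S)"

lemma funpow_inv: "(\<And>S. P S \<Longrightarrow> P (f S)) \<Longrightarrow> P S \<Longrightarrow> P ((f ^^ n) S)"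
  by (induction n) auto

lemma funpow_cancel: "(\<And>S. P S \<Longrightarrow> P (g S)) \<Longrightarrow> (\<And>S. P S \<Longrightarrow> f (g S) = S) \<Longrightarrow> P S
   \<Longrightarrow> (f ^^ n) ((g ^^ n) S) = S"
proof (induction n arbitrary: S)
  case (Suc n)
  have "(f ^^ Suc n) ((g ^^ Suc n) S) = (f ^^ n) (f (g ((g ^^ n) S)))"
    by (simp add: funpow_swap1)
  also have "\<dots> = (f ^^ n) ((g ^^ n) S)" using Suc.prems funpow_inv[of P g S n] by simp
  also have "\<dots> = S" using Suc by blast
  finally show ?case .
qed simp

lemma shiftS_vs[simp]: "vs m (shiftS k S) = vs m S" by (simp add: vs_def shiftS_def)

context
  fixes m :: nat
  assumes m2: "2 \<le> m"
begin

lemma q0: "0 < qq m" using m2 by (auto simp: qq_def)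
lemma ppc: "pp m = 0 \<or> 2 \<le> pp m" by (simp add: pp_def)

lemma vs_Rx: "vs m S \<Longrightarrow> vs m (Rx (qq m) S)"
  using vl_Rx[OF q0 ppc] by (cases S) (auto simp: vs_def)
lemma vs_Rxi: "vs m S \<Longrightarrow> vs m (Rxi (qq m) S)"
  using vl_Rxi[OF q0 ppc] by (cases S) (auto simp: vs_def)
lemma vs_Ry: "vs m S \<Longrightarrow> vs m (Ry (pp m) S)"
  using vl_Ry[OF q0 ppc] by (cases S) (auto simp: vs_def)
lemma vs_Ryi: "vs m S \<Longrightarrow> vs m (Ryi (pp m) S)"
  using vl_Ryi[OF q0 ppc] by (cases S) (auto simp: vs_def)
lemma vs_Ly: "vs m S \<Longrightarrow> vs m (Ly (pp m) S)"
  using vl_Ly[OF q0 ppc] by (cases S) (auto simp: vs_def)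
lemma vs_Lxi: "vs m S \<Longrightarrow> vs m (Lxi (qq m) S)"
  using vl_Lxi[OF q0 ppc] by (cases S) (auto simp: vs_def)

lemma vs_Rx_pow: "vs m S \<Longrightarrow> vs m ((Rx (qq m) ^^ n) S)"
  by (rule funpow_inv[where P="vs m"]) (auto intro: vs_Rx)
lemma vs_Rxi_pow: "vs m S \<Longrightarrow> vs m ((Rxi (qq m) ^^ n) S)"
  by (rule funpow_inv[where P="vs m"]) (auto intro: vs_Rxi)
lemma vs_Lxi_pow: "vs m S \<Longrightarrow> vs m ((Lxi (qq m) ^^ n) S)"
  by (rule funpow_inv[where P="vs m"]) (auto intro: vs_Lxi)

lemma vs_actR: "vs m S \<Longrightarrow> vs m (actR m x S)"
  by (auto simp: actR_def simp del: funpow.simps intro!: vs_Rx_pow vs_Rxi_pow vs_Ry vs_Ryi)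

lemma vs_actw: "vs m S \<Longrightarrow> vs m (actw m w S)"
proof (induction w arbitrary: S)
  case (Cons x w)
  then show ?case using vs_actR[of S x] by simp
qed simp

lemma vs_init: "vs m (0, [0])" using q0 by (simp add: vs_def vx_def)

lemma vs_phi: "vs m (phi m w)" by (simp add: phi_def vs_actw vs_init)

lemma Rx_Rxi_S: "vs m S \<Longrightarrow> Rx (qq m) (Rxi (qq m) S) = S"
  using Rx_Rxi[OF q0 ppc] by (cases S) (auto simp: vs_def)
lemma Rxi_Rx_S: "vs m S \<Longrightarrow> Rxi (qq m) (Rx (qq m) S) = S"
  using Rxi_Rx[OF q0 ppc] by (cases S) (auto simp: vs_def)
lemma Ry_Ryi_S: "vs m S \<Longrightarrow> Ry (pp m) (Ryi (pp m) S) = S"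
  using Ry_Ryi[OF q0 ppc] by (cases S) (auto simp: vs_def)
lemma Ryi_Ry_S: "vs m S \<Longrightarrow> Ryi (pp m) (Ry (pp m) S) = S"
  using Ryi_Ry[OF q0 ppc] by (cases S) (auto simp: vs_def)

lemma Rx_Rxi_pow: "vs m S \<Longrightarrow> (Rx (qq m) ^^ n) ((Rxi (qq m) ^^ n) S) = S"
  by (rule funpow_cancel[where P="vs m"]) (auto intro: vs_Rxi Rx_Rxi_S)
lemma Rxi_Rx_pow: "vs m S \<Longrightarrow> (Rxi (qq m) ^^ n) ((Rx (qq m) ^^ n) S) = S"
  by (rule funpow_cancel[where P="vs m"]) (auto intro: vs_Rx Rxi_Rx_S)

lemma actR_cancel: "vs m S \<Longrightarrow> actR m (inv_letter x) (actR m x S) = S"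
proof (cases x)
  case (Pair g s)
  assume v: "vs m S"
  show ?thesis
    using Pair v by (cases g; cases s) (simp_all add: actR_def inv_letter_def vs_Ryi vs_Rxi_pow vs_Rx_pow
      Rxi_Rx_pow Rx_Rxi_pow Ry_Ryi_S Ryi_Ry_S del: funpow.simps)
qed


lemma actw_X: "vs m S \<Longrightarrow> actw m Xw S = Rx (qq m) S"
proof -
  assume v: "vs m S"
  have "actw m Xw S = (Rx (qq m) ^^ Suc (cc m)) (Ryi (pp m) (Ry (pp m) ((Rxi (qq m) ^^ cc m) S)))"
    by (simp add: Xw_def actR_def del: funpow.simps)
  also have "\<dots> = Rx (qq m) ((Rx (qq m) ^^ cc m) ((Rxi (qq m) ^^ cc m) S))"
    using v by (simp add: Ryi_Ry_S vs_Rxi_pow)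
  also have "\<dots> = Rx (qq m) S" using v by (simp add: Rx_Rxi_pow)
  finally show ?thesis .
qed

lemma actw_YX: "vs m S \<Longrightarrow> actw m [(True, True), (False, True)] S = Ry (pp m) (Rx (qq m) (Ryi (pp m) S))"
proof -
  assume v: "vs m S"
  have "actw m [(True, True), (False, True)] S
      = Ry (pp m) ((Rxi (qq m) ^^ cc m) ((Rx (qq m) ^^ Suc (cc m)) (Ryi (pp m) S)))"
    by (simp add: actR_def del: funpow.simps)
  also have "\<dots> = Ry (pp m) ((Rxi (qq m) ^^ cc m) ((Rx (qq m) ^^ cc m) (Rx (qq m) (Ryi (pp m) S))))"
    by (simp only: funpow_Suc_right comp_def)
  also have "\<dots> = Ry (pp m) (Rx (qq m) (Ryi (pp m) S))"
    using v by (simp add: Rxi_Rx_pow vs_Rx vs_Ryi)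
  finally show ?thesis .
qed

lemma actw_Xpow: "vs m S \<Longrightarrow> actw m (concat (replicate k Xw)) S = (Rx (qq m) ^^ k) S"
proof (induction k arbitrary: S)
  case (Suc k)
  have "actw m (concat (replicate (Suc k) Xw)) S = actw m (concat (replicate k Xw)) (actw m Xw S)"
    by simp
  also have "\<dots> = (Rx (qq m) ^^ k) (Rx (qq m) S)" using Suc by (simp add: actw_X vs_Rx)
  also have "\<dots> = (Rx (qq m) ^^ Suc k) S" by (simp add: funpow_swap1)
  finally show ?case .
qed simp

lemma actw_YXpow: "vs m S \<Longrightarrow> actw m (concat (replicate k [(True, True), (False, True)])) S
    = Ry (pp m) ((Rx (qq m) ^^ k) (Ryi (pp m) S))"
proof (induction k arbitrary: S)
  case 0 then show ?case by (simp add: Ry_Ryi_S)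
next
  case (Suc k)
  let ?S' = "Ry (pp m) (Rx (qq m) (Ryi (pp m) S))"
  have v': "vs m ?S'" using Suc.prems by (simp add: vs_Ry vs_Rx vs_Ryi)
  have "actw m (concat (replicate (Suc k) [(True, True), (False, True)])) S
      = actw m (concat (replicate k [(True, True), (False, True)])) ?S'"
    using actw_YX[OF Suc.prems] by simp
  also have "\<dots> = Ry (pp m) ((Rx (qq m) ^^ k) (Ryi (pp m) ?S'))" using Suc.IH[OF v'] .
  also have "Ryi (pp m) ?S' = Rx (qq m) (Ryi (pp m) S)"
    using Suc.prems by (simp add: Ryi_Ry_S vs_Rx vs_Ryi)
  finally show ?case by (simp add: funpow_swap1)
qed

lemma Rx_q: "vs m S \<Longrightarrow> (Rx (qq m) ^^ nat (qq m)) S = shiftS 1 S"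
proof (cases S)
  case (Pair N L)
  assume v: "vs m S"
  then have "L \<noteq> []" using Pair by (auto simp: vs_def)
  then obtain B f where L: "L = B @ [f]" using snoc1 by blast
  have f: "vx (qq m) f" using v Pair L by (auto simp: vs_def intro: vl_last)
  have "(f + qq m) div qq m = 1 \<and> (f + qq m) mod qq m = f"
    using f by (intro divmod_char) (auto simp: vx_def)
  then show ?thesis using Pair L Rx_pow[OF q0 ppc f, of "nat (qq m)" N B] q0 by simp
qed

lemma Ryi_odd: "odd m \<Longrightarrow> vs m S \<Longrightarrow> Ryi (pp m) S = shiftS (-1) (Ry (pp m) S)"
proof (cases S)
  case (Pair N L)
  assume o: "odd m" and v: "vs m S"
  have p2: "pp m = 2" using o by (simp add: pp_def)
  show ?thesis
  proof (cases "3 \<le> length L \<and> last L = 0")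
    case True
    then obtain B e where L: "L = B @ [e, 0]" using snoc2[of L] by fastforce
    have "vy (pp m) e" using v Pair L vl_snoc by (auto simp: vs_def)
    then have e: "e = 1" using p2 by (auto simp: vy_def)
    have lB: "1 \<le> length B" using True L by auto
    show ?thesis using Pair L e p2 Ry_merge[OF lB] Ryi_merge[OF lB] by simp
  next
    case False
    have r1: "Ry (pp m) (N, L) = (N, L @ [1, 0])" by (simp only: Ry.simps if_not_P[OF False] if_False)
    have r2: "Ryi (pp m) (N, L) = (N - 1, L @ [1, 0])" using p2 by (simp only: Ryi.simps if_not_P[OF False] if_False) simp
    show ?thesis using Pair r1 r2 by simp
  qed
qed

lemma braid_model: "vs m S \<Longrightarrow> actw m (Pi False True m) S = actw m (Pi True False m) S"
proof (cases "odd m")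
  case True
  assume v: "vs m S"
  define c where "c = cc m"
  have mc: "m = 2 * c + 1" using True by (simp add: c_def cc_def)
  have qm: "nat (qq m) = Suc c + c" using True mc by (simp add: qq_def)
  have "Pi False True m = concat (replicate c Xw) @ [(False, True)]"
    using mc by (simp only: Pi_odd Xw_def)
  then have l: "actw m (Pi False True m) S = Ry (pp m) S"
    using v by (simp add: actw_Xpow actR_def c_def Rxi_Rx_pow del: funpow.simps)
  have "Pi True False m = concat (replicate c [(True, True), (False, True)]) @ [(True, True)]"
    using mc by (simp only: Pi_odd)
  then have "actw m (Pi True False m) S
     = (Rx (qq m) ^^ Suc c) (Ryi (pp m) (Ry (pp m) ((Rx (qq m) ^^ c) (Ryi (pp m) S))))"
    using v by (simp add: actw_YXpow actR_def c_def del: funpow.simps)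
  also have "\<dots> = (Rx (qq m) ^^ Suc c) ((Rx (qq m) ^^ c) (Ryi (pp m) S))"
    using v by (simp add: Ryi_Ry_S vs_Rx_pow vs_Ryi del: funpow.simps)
  also have "\<dots> = (Rx (qq m) ^^ nat (qq m)) (Ryi (pp m) S)"
    by (simp only: qm funpow_add comp_def)
  also have "\<dots> = shiftS 1 (Ryi (pp m) S)" using v by (simp add: Rx_q vs_Ryi)
  also have "\<dots> = Ry (pp m) S" using v True by (simp add: Ryi_odd)
  finally show ?thesis using l by simp
next
  case False
  assume v: "vs m S"
  define k where "k = m div 2"
  have mk: "m = 2 * k" using False by (simp add: k_def)
  have qk: "nat (qq m) = k" using False by (simp add: qq_def k_def)
  have "Pi False True m = concat (replicate k Xw)" using mk by (simp only: Pi_even Xw_def)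
  then have l: "actw m (Pi False True m) S = shiftS 1 S"
    using v Rx_q[OF v] qk by (simp add: actw_Xpow)
  have "Pi True False m = concat (replicate k [(True, True), (False, True)])" using mk by (simp only: Pi_even)
  then have "actw m (Pi True False m) S = Ry (pp m) ((Rx (qq m) ^^ k) (Ryi (pp m) S))"
    using v by (simp add: actw_YXpow)
  also have "\<dots> = Ry (pp m) (shiftS 1 (Ryi (pp m) S))" using v Rx_q[of "Ryi (pp m) S"] qk by (simp add: vs_Ryi)
  also have "\<dots> = shiftS 1 S" using v by (simp add: Ry_shift Ry_Ryi_S)
  finally show ?thesis using l by simp
qed

lemma actw_inv: "artin_eq m u v \<Longrightarrow> vs m S \<Longrightarrow> actw m u S = actw m v S"
proof (induction u v arbitrary: S rule: artin_eq.induct)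
  case (refl w) then show ?case by simp
next
  case (sym u v) then show ?case by simp
next
  case (trans u v w) then show ?case by simp
next
  case (cong u v x y)
  then show ?case by (simp add: vs_actw)
next
  case (cancel x)
  then show ?case by (simp add: actR_cancel)
next
  case braid
  then show ?case by (rule braid_model)
qed

lemma phi_inv: "artin_eq m u v \<Longrightarrow> phi m u = phi m v"
  by (simp add: phi_def actw_inv vs_init)

end


fun sectL :: "nat \<Rightarrow> int list \<Rightarrow> word" where
  "sectL m [] = []"
| "sectL m [f] = word_pow Xw f"
| "sectL m (f # e # L) = word_pow Xw f @ word_pow (Yw m) e @ sectL m L"

definition sect :: "nat \<Rightarrow> state \<Rightarrow> word" where
  "sect m S = word_pow (delta m) (fst S) @ sectL m (snd S)"

lemma sect_pair[simp]: "sect m (N, L) = word_pow (delta m) N @ sectL m L"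
  by (simp add: sect_def)

lemma sectL_snoc: "odd (length L) \<Longrightarrow> sectL m (L @ [e, f]) = sectL m L @ word_pow (Yw m) e @ word_pow Xw f"
  by (induction m L rule: sectL.induct) auto

lemma sectL_last: "even (length B) \<Longrightarrow> sectL m (B @ [f]) = sectL m (B @ [0]) @ word_pow Xw f"
  by (induction m B rule: sectL.induct) auto

lemma sectL_hd: "sectL m (f # T) = word_pow Xw f @ sectL m (0 # T)"
  by (cases T) auto

lemma list_x: "x # concat (replicate c [y, x]) = concat (replicate c [x, y]) @ [x]"
  by (induction c) auto

context
  fixes m :: nat
  assumes m2: "2 \<le> m"
begin

lemma Yw_eq: "Yw m = concat (replicate (cc m) Xw) @ [(False, True)]"
proof (cases "odd m")
  case True
  then have "m = 2 * (m div 2) + 1" by simp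
  then have "Pi False True m = concat (replicate (m div 2) Xw) @ [(False, True)]"
    by (metis Pi_odd Xw_def)
  then show ?thesis using True by (simp add: Yw_def cc_def Delta_def)
qed (simp add: Yw_def cc_def)

lemma Xc1_eq: "concat (replicate (Suc (cc m)) Xw) = Yw m @ [(True, True)]"
  by (simp only: concat_rep_snoc Yw_eq) (simp add: Xw_def)

lemma qq_nonneg: "0 \<le> qq m" by (simp add: qq_def)

lemma Xq_delta: "artin_eq m (word_pow Xw (qq m)) (delta m)"
proof (cases "odd m")
  case True
  define c where "c = m div 2"
  have mc: "m = 2 * c + 1" using True by (simp add: c_def)
  have D: "Delta m = concat (replicate c Xw) @ [(False, True)]"
    using mc by (simp only: Delta_def Pi_odd Xw_def)
  have D': "Pi True False m = concat (replicate c [(True, True), (False, True)]) @ [(True, True)]"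
    using mc by (simp only: Pi_odd)
  have "word_pow Xw (qq m) = word_pow Xw (int (c + c + 1))"
    using True mc by (simp add: qq_def)
  also have "\<dots> = concat (replicate (c + c + 1) Xw)" by (rule wp_of_nat)
  also have "\<dots> = concat (replicate c Xw) @ concat (replicate c Xw) @ Xw"
    by (simp only: Suc_eq_plus1[symmetric] concat_rep_snoc replicate_add concat_append append_assoc)
  also have "\<dots> = concat (replicate c Xw) @ ((False, True) # concat (replicate c [(True, True), (False, True)])) @ [(True, True)]"
    by (simp only: list_x Xw_def) simp
  also have "\<dots> = Delta m @ Pi True False m"
    unfolding D D' by simp
  finally have 1: "word_pow Xw (qq m) = Delta m @ Pi True False m" .
  have "artin_eq m (Delta m @ Pi True False m) (Delta m @ Delta m)"
    using ae_appL[OF artin_eq.braid[of m, THEN ae_sym], of "Delta m"] by (simp add: Delta_def)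
  then show ?thesis using 1 True by (simp add: delta_def)
next
  case False
  define k where "k = m div 2"
  have mk: "m = 2 * k" using False by (simp add: k_def)
  have "word_pow Xw (qq m) = concat (replicate k Xw)" using False by (simp add: qq_def k_def)
  also have "\<dots> = delta m" using False mk by (simp only: delta_def Delta_def Pi_even Xw_def) simp
  finally show ?thesis by simp
qed

lemma Yp_delta: "0 < pp m \<Longrightarrow> word_pow (Yw m) (pp m) = delta m"
  by (simp add: pp_def Yw_def delta_def split: if_splits)
     (simp add: word_pow_def numeral_2_eq_2)

lemma D1: "artin_eq m (word_pow (delta m) N @ M @ delta m) (word_pow (delta m) (N + 1) @ M)"
proof -
  have "artin_eq m (word_pow (delta m) N @ M @ delta m) (word_pow (delta m) N @ delta m @ M)"
    using ae_appL[OF delta_central[OF m2, of M, unfolded comm_def, THEN ae_sym]] by simp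
  also have "artin_eq m (word_pow (delta m) N @ delta m @ M) (word_pow (delta m) (N + 1) @ M)"
    using ae_appR[OF wp_succ[of m "delta m" N, THEN ae_sym], of M] by simp
  finally show ?thesis .
qed

lemma sect_Rx: "vs m (N, L) \<Longrightarrow> artin_eq m (sect m (Rx (qq m) (N, L))) (sect m (N, L) @ Xw)"
proof -
  assume v: "vs m (N, L)"
  then have "L \<noteq> []" by (auto simp: vs_def)
  then obtain B f where L: "L = B @ [f]" using snoc1 by blast
  have f: "vx (qq m) f" using v unfolding L vs_def by (auto intro: vl_last)
  have eB: "even (length B)" using vl_odd[of "qq m" "pp m" L] v L by (simp add: vs_def)
  let ?D = "word_pow (delta m)" and ?sB = "sectL m (B @ [0])"
  have s: "sectL m (B @ [g]) = ?sB @ word_pow Xw g" for g using sectL_last[OF eB] .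
  show ?thesis
  proof (cases "f + 1 = qq m")
    case True
    have "artin_eq m (?D N @ ?sB @ word_pow Xw f @ Xw) (?D N @ ?sB @ word_pow Xw (f + 1))"
      using ae_appL[OF wp_succ[THEN ae_sym], of m "?D N @ ?sB"] by simp
    also have "artin_eq m (?D N @ ?sB @ word_pow Xw (f + 1)) (?D N @ ?sB @ delta m)"
      using True ae_appL[OF Xq_delta, of "?D N @ ?sB"] by simp
    also have "artin_eq m (?D N @ ?sB @ delta m) (?D (N + 1) @ ?sB)" by (rule D1)
    finally show ?thesis using True L s[of f] s[of 0] by (simp add: ae_sym)
  next
    case False
    show ?thesis using False L s[of f] s[of "f+1"]
      using ae_appL[OF wp_succ[THEN ae_sym], of m "?D N @ ?sB" Xw f] by (simp add: ae_sym)
  qed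
qed


lemma wp_m1[simp]: "word_pow w (-1) = inv_word w" by (simp add: word_pow_def)

lemma wp_addL1: "artin_eq m (w @ word_pow w e) (word_pow w (e + 1))"
  using wp_add[of m w 1 e] by (simp add: add.commute)
lemma wp_addR1: "artin_eq m (word_pow w e @ w) (word_pow w (e + 1))"
  using wp_succ[of m w e] by (simp add: ae_sym)
lemma wp_invL1: "artin_eq m (inv_word w @ word_pow w e) (word_pow w (e - 1))"
  using wp_add[of m w "-1" e] by simp
lemma wp_invR1: "artin_eq m (word_pow w e @ inv_word w) (word_pow w (e - 1))"
  using wp_pred[of m w e] by (simp add: ae_sym)

lemma DC: "artin_eq m (u @ word_pow (delta m) N @ v) (word_pow (delta m) N @ u @ v)"
  using ae_appR[OF delta_pow_central[OF m2, of N u, unfolded comm_def, THEN ae_sym], of v] by simp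

lemma sect_Rxi: "vs m (N, L) \<Longrightarrow> artin_eq m (sect m (Rxi (qq m) (N, L))) (sect m (N, L) @ inv_word Xw)"
proof -
  assume v: "vs m (N, L)"
  then have "L \<noteq> []" by (auto simp: vs_def)
  then obtain B f where L: "L = B @ [f]" using snoc1 by blast
  have eB: "even (length B)" using vl_odd[of "qq m" "pp m" L] v L by (simp add: vs_def)
  let ?D = "word_pow (delta m)" and ?sB = "sectL m (B @ [0])"
  have s: "sectL m (B @ [g]) = ?sB @ word_pow Xw g" for g using sectL_last[OF eB] .
  show ?thesis
  proof (cases "f = 0")
    case True
    have "artin_eq m (?D (N - 1) @ ?sB @ word_pow Xw (qq m - 1)) (?D (N - 1) @ ?sB @ word_pow Xw (qq m) @ inv_word Xw)"
      using ae_appL[OF wp_pred, of m "?D (N - 1) @ ?sB"] by simp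
    also have "artin_eq m (?D (N - 1) @ ?sB @ word_pow Xw (qq m) @ inv_word Xw) (?D (N - 1) @ ?sB @ delta m @ inv_word Xw)"
      using ae_appL[OF ae_appR[OF Xq_delta], of "?D (N - 1) @ ?sB" "inv_word Xw"] by simp
    also have "artin_eq m (?D (N - 1) @ ?sB @ delta m @ inv_word Xw) (?D N @ ?sB @ inv_word Xw)"
      using ae_appR[OF D1[of "N - 1" ?sB], of "inv_word Xw"] by simp
    finally show ?thesis using True L s[of 0] s[of "qq m - 1"] by simp
  next
    case False
    show ?thesis using False L s[of f] s[of "f - 1"]
      using ae_appL[OF wp_pred, of m "?D N @ ?sB" Xw f] by simp
  qed
qed

lemma sect_Ry: "vs m (N, L) \<Longrightarrow> artin_eq m (sect m (Ry (pp m) (N, L))) (sect m (N, L) @ Yw m)"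
proof -
  assume v: "vs m (N, L)"
  let ?D = "word_pow (delta m)"
  show ?thesis
  proof (cases "3 \<le> length L \<and> last L = 0")
    case True
    then obtain B e where L: "L = B @ [e, 0]" using snoc2[of L] by fastforce
    have lB: "1 \<le> length B" using True L by auto
    have oB: "odd (length B)" using vl_odd[of "qq m" "pp m" L] v L by (simp add: vs_def)
    let ?sB = "sectL m B"
    have sL: "sectL m L = ?sB @ word_pow (Yw m) e" using L sectL_snoc[OF oB] by simp
    have k: "artin_eq m (?sB @ word_pow (Yw m) e @ Yw m) (?sB @ word_pow (Yw m) (e + 1))"
      using ae_appL[OF wp_addR1] by simp
    show ?thesis
    proof (cases "0 < pp m \<and> e + 1 = pp m")
      case True
      have "artin_eq m (?D N @ ?sB @ word_pow (Yw m) e @ Yw m) (?D N @ ?sB @ delta m)"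
        using ae_appL[OF k, of "?D N"] True Yp_delta by simp
      also have "artin_eq m (?D N @ ?sB @ delta m) (?D (N + 1) @ ?sB)" by (rule D1)
      finally show ?thesis using True L sL Ry_merge[OF lB] by (simp add: ae_sym)
    next
      case False
      have "artin_eq m (?D N @ ?sB @ word_pow (Yw m) e @ Yw m) (?D N @ ?sB @ word_pow (Yw m) (e + 1))"
        using ae_appL[OF k, of "?D N"] by simp
      then show ?thesis using False L sL Ry_merge[OF lB] sectL_snoc[OF oB, of m "e + 1" 0]
        by (auto simp: ae_sym)
    qed
  next
    case False
    have r: "Ry (pp m) (N, L) = (N, L @ [1, 0])" by (simp only: Ry.simps if_not_P[OF False] if_False)
    have oL: "odd (length L)" using vl_odd[of "qq m" "pp m" L] v by (simp add: vs_def)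
    show ?thesis unfolding r using sectL_snoc[OF oL, of m 1 0] by simp
  qed
qed

lemma sect_Ryi: "vs m (N, L) \<Longrightarrow> artin_eq m (sect m (Ryi (pp m) (N, L))) (sect m (N, L) @ inv_word (Yw m))"
proof -
  assume v: "vs m (N, L)"
  let ?D = "word_pow (delta m)"
  show ?thesis
  proof (cases "3 \<le> length L \<and> last L = 0")
    case True
    then obtain B e where L: "L = B @ [e, 0]" using snoc2[of L] by fastforce
    have lB: "1 \<le> length B" using True L by auto
    have oB: "odd (length B)" using vl_odd[of "qq m" "pp m" L] v L by (simp add: vs_def)
    let ?sB = "sectL m B"
    have sL: "sectL m L = ?sB @ word_pow (Yw m) e" using L sectL_snoc[OF oB] by simp
    have k: "artin_eq m (?D N @ ?sB @ word_pow (Yw m) e @ inv_word (Yw m)) (?D N @ ?sB @ word_pow (Yw m) (e - 1))"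
      using ae_appL[OF wp_invR1, of "?D N @ ?sB"] by simp
    show ?thesis
    proof (cases "e - 1 = 0")
      case True
      then show ?thesis using k L sL Ryi_merge[OF lB] by (simp add: ae_sym)
    next
      case False
      then show ?thesis using k L sL Ryi_merge[OF lB] sectL_snoc[OF oB, of m "e - 1" 0]
        by (auto simp: ae_sym)
    qed
  next
    case False
    have oL: "odd (length L)" using vl_odd[of "qq m" "pp m" L] v by (simp add: vs_def)
    let ?sL = "sectL m L"
    show ?thesis
    proof (cases "0 < pp m")
      case True
      have r: "Ryi (pp m) (N, L) = (N - 1, L @ [pp m - 1, 0])"
        using True by (simp only: Ryi.simps if_not_P[OF False] if_False if_True)
      have "artin_eq m (?D (N - 1) @ ?sL @ word_pow (Yw m) (pp m - 1)) (?D (N - 1) @ ?sL @ word_pow (Yw m) (pp m) @ inv_word (Yw m))"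
        using ae_appL[OF wp_pred, of m "?D (N - 1) @ ?sL"] by simp
      also have "\<dots> = ?D (N - 1) @ ?sL @ delta m @ inv_word (Yw m)" using True Yp_delta by simp
      also have "artin_eq m (?D (N - 1) @ ?sL @ delta m @ inv_word (Yw m)) (?D N @ ?sL @ inv_word (Yw m))"
        using ae_appR[OF D1[of "N - 1" ?sL], of "inv_word (Yw m)"] by simp
      finally show ?thesis unfolding r using sectL_snoc[OF oL, of m "pp m - 1" 0] by simp
    next
      case F2: False
      have r: "Ryi (pp m) (N, L) = (N, L @ [-1, 0])"
        using F2 by (simp only: Ryi.simps if_not_P[OF False] if_not_P[OF F2] if_False)
      show ?thesis unfolding r using sectL_snoc[OF oL, of m "-1" 0] by simp
    qed
  qed
qed

lemma sect_Lxi: "vs m (N, L) \<Longrightarrow> artin_eq m (sect m (Lxi (qq m) (N, L))) (inv_word Xw @ sect m (N, L))"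
proof -
  assume v: "vs m (N, L)"
  then have "L \<noteq> []" by (auto simp: vs_def)
  then obtain f T where L: "L = f # T" by (cases L) auto
  let ?D = "word_pow (delta m)" and ?s0 = "sectL m (0 # T)"
  have s: "sectL m (g # T) = word_pow Xw g @ ?s0" for g by (rule sectL_hd)
  have c: "artin_eq m (inv_word Xw @ ?D N @ word_pow Xw f @ ?s0) (?D N @ inv_word Xw @ word_pow Xw f @ ?s0)"
    by (rule DC)
  have c2: "artin_eq m (?D N @ inv_word Xw @ word_pow Xw f @ ?s0) (?D N @ word_pow Xw (f - 1) @ ?s0)"
    using ae_appL[OF ae_appR[OF wp_invL1], of "?D N" Xw f ?s0] by simp
  show ?thesis
  proof (cases "f = 0")
    case True
    have "artin_eq m (?D (N - 1) @ word_pow Xw (qq m - 1) @ ?s0) (?D (N - 1) @ inv_word Xw @ word_pow Xw (qq m) @ ?s0)"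
      using ae_appL[OF ae_appR[OF wp_invL1[THEN ae_sym]], of "?D (N - 1)" Xw "qq m" ?s0] by simp
    also have "artin_eq m (?D (N - 1) @ inv_word Xw @ word_pow Xw (qq m) @ ?s0) (?D (N - 1) @ inv_word Xw @ delta m @ ?s0)"
      using ae_appL[OF ae_appR[OF Xq_delta], of "?D (N - 1) @ inv_word Xw" ?s0] by simp
    also have "artin_eq m (?D (N - 1) @ inv_word Xw @ delta m @ ?s0) (?D (N - 1) @ delta m @ inv_word Xw @ ?s0)"
      using ae_appL[OF DC[of "inv_word Xw" 1 ?s0], of "?D (N - 1)"] by simp
    also have "artin_eq m (?D (N - 1) @ delta m @ inv_word Xw @ ?s0) (?D N @ inv_word Xw @ ?s0)"
      using ae_appR[OF wp_addR1[of "delta m" "N - 1"], of "inv_word Xw @ ?s0"] by simp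
    also have "artin_eq m (?D N @ inv_word Xw @ ?s0) (inv_word Xw @ ?D N @ ?s0)"
      using DC[of "inv_word Xw" N ?s0] by (simp add: ae_sym)
    finally show ?thesis using True L s[of 0] s[of "qq m - 1"] by simp
  next
    case False
    show ?thesis using False L s[of f] s[of "f - 1"] ae_trans[OF c c2] by (simp add: ae_sym)
  qed
qed

lemma sect_Ly: "vs m (N, L) \<Longrightarrow> artin_eq m (sect m (Ly (pp m) (N, L))) (Yw m @ sect m (N, L))"
proof -
  assume v: "vs m (N, L)"
  let ?D = "word_pow (delta m)"
  show ?thesis
  proof (cases "3 \<le> length L \<and> hd L = 0")
    case True
    then obtain x e T where L0: "L = x # e # T" using cons2[of L] by auto
    with True have L: "L = 0 # e # T" by simp
    have lT: "1 \<le> length T" using True L by simp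
    let ?sT = "sectL m T"
    have c1: "artin_eq m (?D N @ Yw m @ word_pow (Yw m) e @ ?sT) (?D N @ word_pow (Yw m) (e + 1) @ ?sT)"
      using ae_appL[OF ae_appR[OF wp_addL1], of "?D N" "Yw m" e ?sT] by simp
    have c: "artin_eq m (Yw m @ ?D N @ word_pow (Yw m) e @ ?sT) (?D N @ word_pow (Yw m) (e + 1) @ ?sT)"
      using ae_trans[OF DC[of "Yw m" N "word_pow (Yw m) e @ ?sT"] c1] .
    have lyeq: "Ly (pp m) (N, L) = (if 0 < pp m \<and> e + 1 = pp m then (N + 1, T)
      else if e + 1 = 0 then (N, T) else (N, 0 # (e + 1) # T))" using L lT by simp
    show ?thesis
    proof (cases "0 < pp m \<and> e + 1 = pp m")
      case True
      have "artin_eq m (?D N @ word_pow (Yw m) (e + 1) @ ?sT) (?D (N + 1) @ ?sT)"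
        using True Yp_delta ae_appR[OF wp_addR1[of "delta m" N], of ?sT] by simp
      then show ?thesis using True L lyeq ae_trans[OF c] by (simp add: ae_sym)
    next
      case False
      then show ?thesis using L lyeq c by (auto simp: ae_sym)
    qed
  next
    case False
    have lyeq: "Ly (pp m) (N, L) = (N, 0 # 1 # L)" by (simp only: Ly.simps if_not_P[OF False] if_False)
    show ?thesis unfolding lyeq using DC[of "Yw m" N "sectL m L"] by (simp add: ae_sym)
  qed
qed
end


lemma vl_snoc_induct:
  assumes "vl q p L"
    and base: "\<And>f. vx q f \<Longrightarrow> P [f]"
    and step: "\<And>L e f. vl q p L \<Longrightarrow> vy p e \<Longrightarrow> vx q f \<Longrightarrow> (1 < length L \<longrightarrow> last L \<noteq> 0) \<Longrightarrow> P L \<Longrightarrow> P (L @ [e, f])"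
  shows "P L"
  using assms(1)
proof (induction "length L" arbitrary: L rule: less_induct)
  case less
  show ?case
  proof (cases "length L = 1")
    case True
    then obtain f where "L = [f]" by (cases L) auto
    then show ?thesis using less.prems base by simp
  next
    case False
    then have "1 < length L" using less.prems by (cases L) auto
    then have "3 \<le> length L" using vl_len3 less.prems by blast
    then obtain B e f where L: "L = B @ [e, f]" using snoc2[of L] by auto
    have h: "vl q p B" "vy p e" "vx q f" "1 < length B \<longrightarrow> last B \<noteq> 0" using less.prems L vl_snoc by auto
    have "P B" using less.hyps[of B] h(1) L by simp
    then show ?thesis using step[OF h] L by simp
  qed
qed

definition actL :: "nat \<Rightarrow> state \<Rightarrow> state" where
  "actL m S = (Lxi (qq m) ^^ cc m) (Ly (pp m) S)"

lemma actR_shift: "actR m x (shiftS k S) = shiftS k (actR m x S)"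
  by (simp add: actR_def funpow_shift Rx_shift Rxi_shift Ry_shift Ryi_shift del: funpow.simps)

lemma actw_shift: "actw m w (shiftS k S) = shiftS k (actw m w S)"
  by (induction w arbitrary: S) (simp_all add: actR_shift)

lemma actL_shift: "actL m (shiftS k S) = shiftS k (actL m S)"
  by (simp add: actL_def funpow_shift Lxi_shift Ly_shift del: funpow.simps)

context
  fixes m :: nat
  assumes m2: "2 \<le> m"
begin

lemma sect_Rx_S: "vs m S \<Longrightarrow> artin_eq m (sect m (Rx (qq m) S)) (sect m S @ Xw)"
  using sect_Rx[OF m2] by (cases S) auto
lemma sect_Rxi_S: "vs m S \<Longrightarrow> artin_eq m (sect m (Rxi (qq m) S)) (sect m S @ inv_word Xw)"
  using sect_Rxi[OF m2] by (cases S) auto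
lemma sect_Ry_S: "vs m S \<Longrightarrow> artin_eq m (sect m (Ry (pp m) S)) (sect m S @ Yw m)"
  using sect_Ry[OF m2] by (cases S) auto
lemma sect_Ryi_S: "vs m S \<Longrightarrow> artin_eq m (sect m (Ryi (pp m) S)) (sect m S @ inv_word (Yw m))"
  using sect_Ryi[OF m2] by (cases S) auto
lemma sect_Ly_S: "vs m S \<Longrightarrow> artin_eq m (sect m (Ly (pp m) S)) (Yw m @ sect m S)"
  using sect_Ly[OF m2] by (cases S) auto
lemma sect_Lxi_S: "vs m S \<Longrightarrow> artin_eq m (sect m (Lxi (qq m) S)) (inv_word Xw @ sect m S)"
  using sect_Lxi[OF m2] by (cases S) auto

lemma sect_Rx_pow: "vs m S \<Longrightarrow> artin_eq m (sect m ((Rx (qq m) ^^ n) S)) (sect m S @ concat (replicate n Xw))"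
proof (induction n)
  case (Suc n)
  have "artin_eq m (sect m ((Rx (qq m) ^^ Suc n) S)) (sect m ((Rx (qq m) ^^ n) S) @ Xw)"
    using sect_Rx_S[OF vs_Rx_pow[OF m2 Suc.prems]] by simp
  also have "artin_eq m (sect m ((Rx (qq m) ^^ n) S) @ Xw) (sect m S @ concat (replicate n Xw) @ Xw)"
    using ae_appR[OF Suc.IH[OF Suc.prems]] by simp
  finally show ?case by (simp add: concat_rep_comm)
qed simp

lemma sect_Rxi_pow: "vs m S \<Longrightarrow> artin_eq m (sect m ((Rxi (qq m) ^^ n) S)) (sect m S @ concat (replicate n (inv_word Xw)))"
proof (induction n)
  case (Suc n)
  have "artin_eq m (sect m ((Rxi (qq m) ^^ Suc n) S)) (sect m ((Rxi (qq m) ^^ n) S) @ inv_word Xw)"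
    using sect_Rxi_S[OF vs_Rxi_pow[OF m2 Suc.prems]] by simp
  also have "artin_eq m (sect m ((Rxi (qq m) ^^ n) S) @ inv_word Xw) (sect m S @ concat (replicate n (inv_word Xw)) @ inv_word Xw)"
    using ae_appR[OF Suc.IH[OF Suc.prems]] by simp
  finally show ?case by (simp add: concat_rep_comm)
qed simp

lemma sect_Lxi_pow: "vs m S \<Longrightarrow> artin_eq m (sect m ((Lxi (qq m) ^^ n) S)) (concat (replicate n (inv_word Xw)) @ sect m S)"
proof (induction n)
  case (Suc n)
  have "artin_eq m (sect m ((Lxi (qq m) ^^ Suc n) S)) (inv_word Xw @ sect m ((Lxi (qq m) ^^ n) S))"
    using sect_Lxi_S[OF vs_Lxi_pow[OF m2 Suc.prems]] by simp
  also have "artin_eq m (inv_word Xw @ sect m ((Lxi (qq m) ^^ n) S)) (inv_word Xw @ concat (replicate n (inv_word Xw)) @ sect m S)"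
    using ae_appL[OF Suc.IH[OF Suc.prems]] by simp
  finally show ?case by simp
qed simp

lemma inv_cancel_mid: "artin_eq m (u @ inv_word v @ v @ w) (u @ w)"
  using ae_appL[OF ae_appR[OF ae_inv_l[of m v]], of u w] by simp

lemma sect_actR: "vs m S \<Longrightarrow> artin_eq m (sect m (actR m x S)) (sect m S @ [x])"
proof -
  assume v: "vs m S"
  let ?c = "cc m" and ?Xc = "concat (replicate (cc m) Xw)"
  have Yw: "Yw m = ?Xc @ [(False, True)]" by (rule Yw_eq[OF m2])
  have Xc1: "concat (replicate (cc m + 1) Xw) = Yw m @ [(True, True)]" using Xc1_eq[OF m2] by simp
  have iXc: "concat (replicate n (inv_word Xw)) = inv_word (concat (replicate n Xw))" for n
    by (simp add: concat_rep_inv)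
  obtain g s where x: "x = (g, s)" by (cases x)
  show ?thesis
  proof (cases s)
    case True
    show ?thesis
    proof (cases g)
      case True
      have "artin_eq m (sect m ((Rx (qq m) ^^ (cc m + 1)) (Ryi (pp m) S))) (sect m (Ryi (pp m) S) @ concat (replicate (cc m + 1) Xw))"
        by (rule sect_Rx_pow[OF vs_Ryi[OF m2 v]])
      also have "artin_eq m (sect m (Ryi (pp m) S) @ concat (replicate (cc m + 1) Xw)) (sect m S @ inv_word (Yw m) @ Yw m @ [(True, True)])"
        using ae_appR[OF sect_Ryi_S[OF v]] Xc1 by simp
      also have "artin_eq m (sect m S @ inv_word (Yw m) @ Yw m @ [(True, True)]) (sect m S @ [(True, True)])"
        by (rule inv_cancel_mid)
      finally show ?thesis using x \<open>s\<close> True by (simp add: actR_def del: funpow.simps)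
    next
      case False
      have "artin_eq m (sect m (Ry (pp m) ((Rxi (qq m) ^^ cc m) S))) (sect m ((Rxi (qq m) ^^ cc m) S) @ Yw m)"
        using sect_Ry_S[OF vs_Rxi_pow[OF m2 v]] by simp
      also have "artin_eq m (sect m ((Rxi (qq m) ^^ cc m) S) @ Yw m) (sect m S @ inv_word ?Xc @ ?Xc @ [(False, True)])"
        using ae_appR[OF sect_Rxi_pow[OF v]] Yw iXc by simp
      also have "artin_eq m (sect m S @ inv_word ?Xc @ ?Xc @ [(False, True)]) (sect m S @ [(False, True)])"
        by (rule inv_cancel_mid)
      finally show ?thesis using x \<open>s\<close> False by (simp add: actR_def del: funpow.simps)
    qed
  next
    case False
    show ?thesis
    proof (cases g)
      case True
      have "artin_eq m (sect m (Ry (pp m) ((Rxi (qq m) ^^ (cc m + 1)) S))) (sect m ((Rxi (qq m) ^^ (cc m + 1)) S) @ Yw m)"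
        by (rule sect_Ry_S[OF vs_Rxi_pow[OF m2 v]])
      also have "artin_eq m (sect m ((Rxi (qq m) ^^ (cc m + 1)) S) @ Yw m) (sect m S @ concat (replicate (cc m + 1) (inv_word Xw)) @ Yw m)"
        using ae_appR[OF sect_Rxi_pow[OF v, of "cc m + 1"], of "Yw m"] by (simp only: append_assoc)
      also have e: "concat (replicate (cc m + 1) (inv_word Xw)) = [(True, False)] @ inv_word (Yw m)"
        by (simp only: iXc Xc1) (simp add: inv_letter_def)
      also have "sect m S @ ([(True, False)] @ inv_word (Yw m)) @ Yw m = sect m S @ [(True, False)] @ inv_word (Yw m) @ Yw m"
        by simp
      also have "artin_eq m (sect m S @ [(True, False)] @ inv_word (Yw m) @ Yw m) (sect m S @ [(True, False)])"
        using inv_cancel_mid[of "sect m S @ [(True, False)]" "Yw m" "[]"] by simp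
      finally show ?thesis using x \<open>\<not> s\<close> True by (simp add: actR_def del: funpow.simps)
    next
      case False
      have "artin_eq m (sect m ((Rx (qq m) ^^ cc m) (Ryi (pp m) S))) (sect m (Ryi (pp m) S) @ ?Xc)"
        using sect_Rx_pow[OF vs_Ryi[OF m2 v]] by simp
      also have "artin_eq m (sect m (Ryi (pp m) S) @ ?Xc) (sect m S @ [(False, False)] @ inv_word ?Xc @ ?Xc)"
        using ae_appR[OF sect_Ryi_S[OF v]] Yw by (simp add: inv_letter_def)
      also have "artin_eq m (sect m S @ [(False, False)] @ inv_word ?Xc @ ?Xc) (sect m S @ [(False, False)])"
        using inv_cancel_mid[of "sect m S @ [(False, False)]" ?Xc "[]"] by simp
      finally show ?thesis using x \<open>\<not> s\<close> False by (simp add: actR_def del: funpow.simps)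
    qed
  qed
qed

lemma sect_init: "sect m (0, [0]) = []" by simp

lemma faithful_sect: "artin_eq m w (sect m (phi m w))"
proof (induction w rule: rev_induct)
  case Nil then show ?case by (simp add: phi_def)
next
  case (snoc x w)
  have "phi m (w @ [x]) = actR m x (phi m w)" by (simp add: phi_append)
  then have "artin_eq m (sect m (phi m (w @ [x]))) (sect m (phi m w) @ [x])"
    using sect_actR[OF vs_phi[OF m2]] by simp
  moreover have "artin_eq m (w @ [x]) (sect m (phi m w) @ [x])" using ae_appR[OF snoc.IH] .
  ultimately show ?case by (blast intro: ae_trans ae_sym)
qed

lemma phi_faithful: "phi m u = phi m v \<Longrightarrow> artin_eq m u v"
  using faithful_sect[of u] faithful_sect[of v] by (metis ae_sym ae_trans)

end


lemma Ry0_app: assumes c: "\<not> (3 \<le> length L \<and> last L = 0)" shows "Ry p (N, L) = (N, L @ [1, 0])"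
  by (simp only: Ry.simps if_False if_not_P[OF c])
lemma Ryi0_app: assumes c: "\<not> (3 \<le> length L \<and> last L = 0)" shows "Ryi 0 (N, L) = (N, L @ [-1, 0])"
  by (simp only: Ryi.simps if_False if_not_P[OF c] less_irrefl)

lemma Ry0_pow: "L \<noteq> [] \<Longrightarrow> \<not> (3 \<le> length L \<and> last L = 0) \<Longrightarrow> (Ry 0 ^^ Suc j) (N, L) = (N, L @ [int j + 1, 0])"
proof (induction j)
  case 0 then show ?case using Ry0_app[OF 0(2)] by simp
next
  case (Suc j)
  have lB: "1 \<le> length L" using Suc.prems by (cases L) auto
  have "(Ry 0 ^^ Suc (Suc j)) (N, L) = Ry 0 (N, L @ [int j + 1, 0])" using Suc by simp
  also have "\<dots> = (N, L @ [int (Suc j) + 1, 0])" using Ry_merge[OF lB, of 0 N "int j + 1"] by simp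
  finally show ?case .
qed

lemma Ryi0_pow: "L \<noteq> [] \<Longrightarrow> \<not> (3 \<le> length L \<and> last L = 0) \<Longrightarrow> (Ryi 0 ^^ Suc j) (N, L) = (N, L @ [- int j - 1, 0])"
proof (induction j)
  case 0 then show ?case using Ryi0_app[OF 0(2)] by simp
next
  case (Suc j)
  have lB: "1 \<le> length L" using Suc.prems by (cases L) auto
  have "(Ryi 0 ^^ Suc (Suc j)) (N, L) = Ryi 0 (N, L @ [- int j - 1, 0])" using Suc by simp
  also have "\<dots> = (N, L @ [- int (Suc j) - 1, 0])" using Ryi_merge[OF lB, of 0 N "- int j - 1"] by simp
  finally show ?case .
qed

lemma actw_rep1: "actw m (concat (replicate n [x])) S = (actR m x ^^ n) S"
  by (induction n arbitrary: S) (simp_all add: funpow_swap1)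

context
  fixes m :: nat
  assumes m2: "2 \<le> m"
begin

lemma actw_Delta: "vs m S \<Longrightarrow> actw m (Delta m) S = (if odd m then Ry (pp m) S else shiftS 1 S)"
proof (cases "odd m")
  case True
  assume v: "vs m S"
  define c where "c = cc m"
  have mc: "m = 2 * c + 1" using True by (simp add: c_def cc_def)
  have "Delta m = concat (replicate c Xw) @ [(False, True)]"
    using mc by (simp only: Delta_def Pi_odd Xw_def)
  then show ?thesis
    using v True by (simp add: actw_Xpow[OF m2] actR_def c_def Rxi_Rx_pow[OF m2] del: funpow.simps)
next
  case False
  assume v: "vs m S"
  define k where "k = m div 2"
  have mk: "m = 2 * k" using False by (simp add: k_def)
  have qk: "nat (qq m) = k" using False by (simp add: qq_def k_def)
  have "Delta m = concat (replicate k Xw)" using mk by (simp only: Delta_def Pi_even Xw_def)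
  then show ?thesis using v Rx_q[OF m2 v] qk False by (simp add: actw_Xpow[OF m2])
qed

lemma actw_delta: "vs m S \<Longrightarrow> actw m (delta m) S = shiftS 1 S"
proof (cases "odd m")
  case True
  assume v: "vs m S"
  have "Ry (pp m) S = shiftS 1 (Ryi (pp m) S)" using Ryi_odd[OF m2 True v] by simp
  then have "Ry (pp m) (Ry (pp m) S) = shiftS 1 S"
    using v by (simp add: Ry_shift Ry_Ryi_S[OF m2])
  then show ?thesis using v True by (simp add: delta_def actw_Delta vs_Ry[OF m2])
next
  case False
  assume v: "vs m S"
  then show ?thesis using False by (simp add: delta_def actw_Delta)
qed

lemma actw_inv_cancel: "vs m S \<Longrightarrow> actw m (inv_word u) (actw m u S) = S"
  using actw_inv[OF m2 ae_inv_r[of m u]] by simp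

lemma actw_delta_inv: "vs m S \<Longrightarrow> actw m (inv_word (delta m)) S = shiftS (-1) S"
proof -
  assume v: "vs m S"
  let ?S = "shiftS (-1) S"
  have "actw m (inv_word (delta m)) (actw m (delta m) ?S) = ?S" using v by (simp add: actw_inv_cancel)
  then show ?thesis using v by (simp add: actw_delta)
qed

lemma actw_delta_pow: "vs m S \<Longrightarrow> actw m (word_pow (delta m) k) S = shiftS k S"
proof (cases "0 \<le> k")
  case True
  assume v: "vs m S"
  have "actw m (concat (replicate n (delta m))) S = shiftS (int n) S" for n
    using v by (induction n arbitrary: S) (simp_all add: actw_delta add.commute)
  then show ?thesis using True by (simp add: word_pow_def)
next
  case False
  assume v: "vs m S"
  have "actw m (concat (replicate n (inv_word (delta m)))) S = shiftS (- int n) S" for n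
    using v by (induction n arbitrary: S) (simp_all add: actw_delta_inv algebra_simps)
  then show ?thesis using False by (simp add: word_pow_def)
qed

lemma phi_delta_app: "phi m (word_pow (delta m) k @ u) = shiftS k (phi m u)"
proof -
  have "phi m (word_pow (delta m) k @ u) = actw m u (shiftS k (0, [0]))"
    by (simp add: phi_def actw_delta_pow vs_init[OF m2] del: shiftS_pair)
  then show ?thesis by (simp add: actw_shift phi_def del: shiftS_pair)
qed

lemma actw_Yw_pow: "vs m (N, L) \<Longrightarrow> vy (pp m) e \<Longrightarrow> \<not> (3 \<le> length L \<and> last L = 0)
   \<Longrightarrow> actw m (word_pow (Yw m) e) (N, L) = (N, L @ [e, 0])"
proof (cases "odd m")
  case True
  assume v: "vs m (N, L)" and e: "vy (pp m) e" and c: "\<not> (3 \<le> length L \<and> last L = 0)"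
  have "e = 1" using e True by (auto simp: vy_def pp_def)
  then show ?thesis using True v Ry0_app[OF c] by (simp add: Yw_def actw_Delta)
next
  case False
  assume v: "vs m (N, L)" and e: "vy (pp m) e" and c: "\<not> (3 \<le> length L \<and> last L = 0)"
  have p0: "pp m = 0" "cc m = 0" using False by (auto simp: pp_def cc_def)
  have Ln: "L \<noteq> []" using v by (auto simp: vs_def)
  have aR: "actR m (False, True) = Ry 0" "actR m (False, False) = Ryi 0"
    using p0 by (auto simp: actR_def fun_eq_iff)
  show ?thesis
  proof (cases "0 < e")
    case True
    define j where "j = nat e - 1"
    have j: "nat e = Suc j" "e = int j + 1" using True by (auto simp: j_def)
    have w: "word_pow (Yw m) e = concat (replicate (Suc j) [(False, True)])"
      using True j False by (simp add: Yw_def word_pow_def)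
    have "actw m (word_pow (Yw m) e) (N, L) = (actR m (False, True) ^^ Suc j) (N, L)"
      unfolding w by (rule actw_rep1)
    also have "\<dots> = (Ry 0 ^^ Suc j) (N, L)" by (simp only: aR)
    also have "\<dots> = (N, L @ [int j + 1, 0])" by (rule Ry0_pow[OF Ln c])
    finally show ?thesis using j by simp
  next
    case F2: False
    then have "e < 0" using e by (auto simp: vy_def)
    define j where "j = nat (-e) - 1"
    have j: "nat (-e) = Suc j" "e = - int j - 1" using \<open>e < 0\<close> by (auto simp: j_def)
    have w: "word_pow (Yw m) e = concat (replicate (Suc j) [(False, False)])"
      using \<open>e < 0\<close> j False by (simp add: Yw_def word_pow_def inv_letter_def)
    have "actw m (word_pow (Yw m) e) (N, L) = (actR m (False, False) ^^ Suc j) (N, L)"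
      unfolding w by (rule actw_rep1)
    also have "\<dots> = (Ryi 0 ^^ Suc j) (N, L)" by (simp only: aR)
    also have "\<dots> = (N, L @ [- int j - 1, 0])" by (rule Ryi0_pow[OF Ln c])
    finally show ?thesis using j by simp
  qed
qed


lemma actw_X_pow_last: "vs m (N, B @ [0]) \<Longrightarrow> vx (qq m) f \<Longrightarrow> actw m (word_pow Xw f) (N, B @ [0]) = (N, B @ [f])"
proof -
  assume v: "vs m (N, B @ [0])" and f: "vx (qq m) f"
  have f0: "0 \<le> f" using f by (simp add: vx_def)
  have "actw m (word_pow Xw f) (N, B @ [0]) = (Rx (qq m) ^^ nat f) (N, B @ [0])"
    using f0 v by (simp add: word_pow_def actw_Xpow[OF m2])
  also have "\<dots> = (N + (0 + int (nat f)) div qq m, B @ [(0 + int (nat f)) mod qq m])"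
    by (rule Rx_pow[OF q0[OF m2] ppc[OF m2]]) (simp add: vx_def q0[OF m2])
  also have "\<dots> = (N + f div qq m, B @ [f mod qq m])" using f0 by simp
  also have "\<dots> = (N, B @ [f])" using f by (simp add: vx_def)
  finally show ?thesis .
qed

lemma phi_sectL: assumes "vl (qq m) (pp m) L" shows "phi m (sectL m L) = (0, L)"
proof (rule vl_snoc_induct[OF assms])
  fix f assume f: "vx (qq m) f"
  show "phi m (sectL m [f]) = (0, [f])"
    using actw_X_pow_last[of 0 "[]" f] vs_init[OF m2] f by (simp add: phi_def)
next
  fix L e f
  assume h1: "vl (qq m) (pp m) L" and h2: "vy (pp m) e" and h3: "vx (qq m) f"
    and h4: "1 < length L \<longrightarrow> last L \<noteq> 0" and IH: "phi m (sectL m L) = (0, L)"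
  have oL: "odd (length L)" using vl_odd h1 by blast
  have c: "\<not> (3 \<le> length L \<and> last L = 0)" using h4 by auto
  have vL: "vs m (0, L)" using h1 by (simp add: vs_def)
  have "phi m (sectL m (L @ [e, f])) = actw m (word_pow Xw f) (actw m (word_pow (Yw m) e) (phi m (sectL m L)))"
    using sectL_snoc[OF oL] by (simp add: phi_append)
  also have "\<dots> = actw m (word_pow Xw f) (0, (L @ [e]) @ [0])"
    using IH actw_Yw_pow[OF vL h2 c] by simp
  also have "\<dots> = (0, L @ [e, f])"
  proof -
    have "vs m (0, (L @ [e]) @ [0])" using h1 h2 h4 q0[OF m2] by (simp add: vs_def vl_snoc vx_def)
    then show ?thesis using actw_X_pow_last[of 0 "L @ [e]" f] h3 by simp
  qed
  finally show "phi m (sectL m (L @ [e, f])) = (0, L @ [e, f])" .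
qed

lemma phi_sect: "vs m S \<Longrightarrow> phi m (sect m S) = S"
proof (cases S)
  case (Pair N L)
  assume v: "vs m S"
  then have "phi m (sectL m L) = (0, L)" using Pair by (simp add: vs_def phi_sectL)
  then show ?thesis using Pair by (simp add: phi_delta_app sect_def)
qed

lemma vs_actL: "vs m S \<Longrightarrow> vs m (actL m S)"
  by (simp add: actL_def vs_Lxi_pow[OF m2] vs_Ly[OF m2])

lemma sect_actL: "vs m S \<Longrightarrow> artin_eq m (sect m (actL m S)) ([(False, True)] @ sect m S)"
proof -
  assume v: "vs m S"
  let ?Xc = "concat (replicate (cc m) Xw)"
  have "artin_eq m (sect m (actL m S)) (concat (replicate (cc m) (inv_word Xw)) @ sect m (Ly (pp m) S))"
    unfolding actL_def by (rule sect_Lxi_pow[OF m2 vs_Ly[OF m2 v]])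
  also have "artin_eq m (concat (replicate (cc m) (inv_word Xw)) @ sect m (Ly (pp m) S))
      (inv_word ?Xc @ Yw m @ sect m S)"
    using ae_appL[OF sect_Ly_S[OF m2 v]] by (simp add: concat_rep_inv)
  also have "inv_word ?Xc @ Yw m @ sect m S = inv_word ?Xc @ ?Xc @ [(False, True)] @ sect m S"
    using Yw_eq[OF m2] by simp
  also have "artin_eq m (inv_word ?Xc @ ?Xc @ [(False, True)] @ sect m S) ([(False, True)] @ sect m S)"
    using inv_cancel_mid[OF m2, of "[]" ?Xc] by simp
  finally show ?thesis .
qed

lemma phi_Cons_a: "phi m ((False, True) # w) = actL m (phi m w)"
proof -
  have v: "vs m (phi m w)" by (rule vs_phi[OF m2])
  have "artin_eq m ((False, True) # w) ([(False, True)] @ sect m (phi m w))"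
    using ae_appL[OF faithful_sect[OF m2, of w], of "[(False, True)]"] by simp
  also have "artin_eq m ([(False, True)] @ sect m (phi m w)) (sect m (actL m (phi m w)))"
    using sect_actL[OF v] by (rule ae_sym)
  finally have "phi m ((False, True) # w) = phi m (sect m (actL m (phi m w)))" by (rule phi_inv[OF m2])
  also have "\<dots> = actL m (phi m w)" by (rule phi_sect[OF vs_actL[OF v]])
  finally show ?thesis .
qed
end


abbreviation la :: letter where "la \<equiv> (False, True)"


lemma rep_comm_pow: "0 < K \<Longrightarrow> even (length B) \<Longrightarrow> concat (replicate K [x, y]) @ B = B @ concat (replicate K [x, y])
   \<Longrightarrow> \<exists>j. B = concat (replicate j [x, y])"
proof (induction "length B" arbitrary: B rule: less_induct)
  case less
  show ?case
  proof (cases B)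
    case Nil then show ?thesis by (intro exI[of _ 0]) simp
  next
    case (Cons u B1)
    then obtain v B' where B: "B = u # v # B'" using less.prems(2) by (cases B1) auto
    obtain K' where K: "K = Suc K'" using less.prems(1) by (cases K) auto
    have hK: "concat (replicate K [x, y]) = x # y # concat (replicate K' [x, y])" using K by simp
    have e0: "concat (replicate K [x, y]) @ u # v # B' = u # v # B' @ concat (replicate K [x, y])"
      using less.prems(3) B by simp
    then have uv: "u = x" "v = y" unfolding hK by auto
    have e1: "x # y # concat (replicate K' [x, y]) @ x # y # B' = x # y # B' @ concat (replicate K [x, y])"
      using e0 uv unfolding hK by simp
    have c: "concat (replicate K' [x, y]) @ [x, y] = [x, y] @ concat (replicate K' [x, y])"
      by (rule concat_rep_comm[symmetric])
    have "concat (replicate K [x, y]) @ B' = x # y # concat (replicate K' [x, y]) @ B'" unfolding hK by simp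
    also have "\<dots> = concat (replicate K' [x, y]) @ x # y # B'" using c by (metis append.assoc append_Cons append_Nil)
    also have "\<dots> = B' @ concat (replicate K [x, y])" using e1 by simp
    finally have "concat (replicate K [x, y]) @ B' = B' @ concat (replicate K [x, y])" .
    moreover have "even (length B')" using less.prems(2) B by simp
    ultimately obtain j where "B' = concat (replicate j [x, y])"
      using less.hyps[of B'] B less.prems(1) by auto
    then show ?thesis using B uv by (intro exI[of _ "Suc j"]) simp
  qed
qed

lemma phi_rep_right: "phi m (w @ concat (replicate K [x])) = (actR m x ^^ K) (phi m w)"
  by (simp only: phi_append actw_rep1)

lemma list_x2: "[x] @ concat (replicate K [y, x]) @ [y, z] = concat (replicate (Suc K) [x, y]) @ [z]"
proof -
  have "[x] @ concat (replicate K [y, x]) @ [y, z] = (x # concat (replicate K [y, x])) @ [y, z]" by simp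
  also have "\<dots> = concat (replicate K [x, y]) @ [x, y] @ [z]" by (simp only: list_x) simp
  also have "\<dots> = (concat (replicate K [x, y]) @ [x, y]) @ [z]" by simp
  also have "concat (replicate K [x, y]) @ [x, y] = concat (replicate (Suc K) [x, y])"
    by (rule concat_rep_snoc[symmetric])
  finally show ?thesis .
qed

context
  fixes m :: nat
  assumes m2: "2 \<le> m"
begin

lemma phi_rep_left: "phi m (concat (replicate K [la]) @ w) = (actL m ^^ K) (phi m w)"
  by (induction K) (simp_all add: phi_Cons_a[OF m2])


lemma wp_la_nat: "word_pow [la] (int j) = concat (replicate j [la])" by simp


lemma faithful_delta: "phi m w = (N, L) \<Longrightarrow> phi m u = (N', L) \<Longrightarrow> artin_eq m w (word_pow (delta m) (N - N') @ u)"
proof -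
  assume 1: "phi m w = (N, L)" and 2: "phi m u = (N', L)"
  have "phi m (word_pow (delta m) (N - N') @ u) = (N, L)" using phi_delta_app[OF m2] 2 by simp
  then show ?thesis using 1 by (intro phi_faithful[OF m2]) simp
qed


lemma comm_Cons: "artin_eq m (w @ A) (A @ w) \<Longrightarrow> A = concat (replicate K [x]) \<Longrightarrow>
  artin_eq m ((x # w) @ A) (A @ (x # w))"
proof -
  assume h: "artin_eq m (w @ A) (A @ w)" and A: "A = concat (replicate K [x])"
  have 1: "artin_eq m ([x] @ w @ A) ([x] @ A @ w)" by (rule ae_appL[OF h])
  have "[x] @ A = A @ [x]" using A concat_rep_comm[of "[x]" K] by simp
  then have 2: "[x] @ A @ w = A @ (x # w)" by (metis append.assoc append_Cons append_Nil)
  have 3: "(x # w) @ A = [x] @ w @ A" by simp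
  show ?thesis using 1 unfolding 3 2 .
qed


lemma comm_snoc: "artin_eq m (w @ A) (A @ w) \<Longrightarrow> A = concat (replicate K [x]) \<Longrightarrow>
  artin_eq m ((w @ [x]) @ A) (A @ (w @ [x]))"
proof -
  assume h: "artin_eq m (w @ A) (A @ w)" and A: "A = concat (replicate K [x])"
  have "artin_eq m (w @ A @ [x]) (A @ w @ [x])" using ae_appR[OF h, of "[x]"] by simp
  moreover have "[x] @ A = A @ [x]" using A concat_rep_comm[of "[x]" K] by simp
  ultimately show ?thesis by (metis append.assoc)
qed


lemma la_inv: "inv_word [la] = [(False, False)]" by (simp add: inv_letter_def)


lemma shift_left: "artin_eq m (la # w) (word_pow (delta m) i @ word_pow [la] j) \<Longrightarrow>
   artin_eq m w (word_pow (delta m) i @ word_pow [la] (j - 1))"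
proof -
  assume h: "artin_eq m (la # w) (word_pow (delta m) i @ word_pow [la] j)"
  have "artin_eq m w (inv_word [la] @ [la] @ w)"
    using ae_appR[OF ae_inv_l[of m "[la]"], of w] by (simp add: ae_sym)
  also have "artin_eq m (inv_word [la] @ [la] @ w) (inv_word [la] @ word_pow (delta m) i @ word_pow [la] j)"
    using ae_appL[OF h, of "inv_word [la]"] by simp
  also have "artin_eq m (inv_word [la] @ word_pow (delta m) i @ word_pow [la] j) (word_pow (delta m) i @ inv_word [la] @ word_pow [la] j)"
    by (rule DC[OF m2])
  also have "artin_eq m (word_pow (delta m) i @ inv_word [la] @ word_pow [la] j) (word_pow (delta m) i @ word_pow [la] (j - 1))"
    using ae_appL[OF wp_invL1[OF m2, of "[la]" j], of "word_pow (delta m) i"] by simp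
  finally show ?thesis .
qed


lemma shift_right: "artin_eq m (w @ [la]) (word_pow (delta m) i @ word_pow [la] j) \<Longrightarrow>
   artin_eq m w (word_pow (delta m) i @ word_pow [la] (j - 1))"
proof -
  assume h: "artin_eq m (w @ [la]) (word_pow (delta m) i @ word_pow [la] j)"
  have "artin_eq m w (w @ [la] @ inv_word [la])"
    using ae_appL[OF ae_inv_r[of m "[la]"], of w] by (simp add: ae_sym)
  also have "artin_eq m (w @ [la] @ inv_word [la]) (word_pow (delta m) i @ word_pow [la] j @ inv_word [la])"
    using ae_appR[OF h, of "inv_word [la]"] by simp
  also have "artin_eq m (word_pow (delta m) i @ word_pow [la] j @ inv_word [la]) (word_pow (delta m) i @ word_pow [la] (j - 1))"
    using ae_appL[OF wp_invR1[OF m2, of "[la]" j], of "word_pow (delta m) i"] by simp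
  finally show ?thesis .
qed


end

context
  fixes m :: nat
  assumes m2: "2 \<le> m" and om: "odd m"
begin

definition "sx = int (cc m) + 1"

lemma q_odd: "qq m = 2 * int (cc m) + 1"
proof -
  have h: "m = 2 * (m div 2) + 1" using om by presburger
  have "int m = int (2 * (m div 2) + 1)" using h by (rule arg_cong)
  also have "\<dots> = 2 * int (m div 2) + 1" by simp
  finally show ?thesis by (simp only: qq_def cc_def if_P[OF om])
qed
lemma p_odd: "pp m = 2" using om by (simp add: pp_def)
lemma c_pos: "1 \<le> cc m"
proof -
  have "3 \<le> m" using om m2 by presburger
  then have "2 div 2 \<le> m div 2" using div_le_mono[of 2 m 2] by simp
  then have "1 \<le> m div 2" by simp
  then show ?thesis by (simp only: cc_def if_P[OF om])
qed

lemma s_mod: "(- int (cc m)) mod qq m = sx"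
proof -
  have "(- int (cc m)) div qq m = -1 \<and> (- int (cc m)) mod qq m = int (cc m) + 1"
    using c_pos by (intro divmod_char) (auto simp: q_odd)
  then show ?thesis by (simp add: sx_def)
qed

lemma s_props: "0 < sx" "sx < qq m" "sx \<noteq> 0"
  using c_pos by (auto simp: sx_def q_odd)

lemma vy_odd: "vy (pp m) e \<longleftrightarrow> e = 1" by (auto simp: vy_def p_odd)

lemma actR_a_odd: "vs m (N, B @ [f]) \<Longrightarrow>
  actR m la (N, B @ [f]) = Ry (pp m) (N + (f - int (cc m)) div qq m, B @ [(f - int (cc m)) mod qq m])"
proof -
  assume v: "vs m (N, B @ [f])"
  have f: "vx (qq m) f" using v by (auto simp: vs_def intro: vl_last)
  show ?thesis using Rxi_pow[OF q0[OF m2] ppc[OF m2] f, of "cc m" N B] by (simp add: actR_def)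
qed

lemma R_long: "vs m (N, B @ [f]) \<Longrightarrow> ((f - int (cc m)) mod qq m \<noteq> 0 \<or> B = []) \<Longrightarrow>
  snd (actR m la (N, B @ [f])) = B @ [(f - int (cc m)) mod qq m, 1, 0]"
proof -
  assume v: "vs m (N, B @ [f])" and c: "(f - int (cc m)) mod qq m \<noteq> 0 \<or> B = []"
  have "\<not> (3 \<le> length (B @ [(f - int (cc m)) mod qq m]) \<and> last (B @ [(f - int (cc m)) mod qq m]) = 0)"
    using c by auto
  from Ry0_app[OF this] show ?thesis using actR_a_odd[OF v] by simp
qed

lemma R_short: "vs m (N, B @ [f]) \<Longrightarrow> (f - int (cc m)) mod qq m = 0 \<Longrightarrow> B \<noteq> [] \<Longrightarrow>
  length (snd (actR m la (N, B @ [f]))) + 2 = length (B @ [f])"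
proof -
  assume v: "vs m (N, B @ [f])" and c: "(f - int (cc m)) mod qq m = 0" and Bn: "B \<noteq> []"
  have vl: "vl (qq m) (pp m) (B @ [f])" using v by (simp add: vs_def)
  have "3 \<le> length (B @ [f])" using vl_len3[OF vl] Bn by simp
  then obtain B2 e where B: "B = B2 @ [e]" using Bn snoc1 by blast
  have "vl (qq m) (pp m) (B2 @ [e, f])" using vl B by simp
  then have e: "vy (pp m) e" and B2: "vl (qq m) (pp m) B2" using vl_snoc by auto
  then have e1: "e = 1" by (simp add: vy_odd)
  have lB2: "1 \<le> length B2" using B2 by (cases B2) auto
  show ?thesis using actR_a_odd[OF v] c B e1 Ry_merge[OF lB2, of "pp m" "N + (f - int (cc m)) div qq m" 1] p_odd
    by simp
qed

lemma vs_actR_pow: "vs m S \<Longrightarrow> vs m ((actR m x ^^ n) S)"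
  by (rule funpow_inv[where P="vs m"]) (auto intro: vs_actR[OF m2])
lemma vs_actL_pow: "vs m S \<Longrightarrow> vs m ((actL m ^^ n) S)"
  by (rule funpow_inv[where P="vs m"]) (auto intro: vs_actL[OF m2])

lemma R_iter: "vs m (N, B @ [f]) \<Longrightarrow> ((f - int (cc m)) mod qq m \<noteq> 0 \<or> B = []) \<Longrightarrow>
  snd ((actR m la ^^ Suc K) (N, B @ [f])) = B @ [(f - int (cc m)) mod qq m] @ concat (replicate K [1, sx]) @ [1, 0]"
proof (induction K)
  case 0 then show ?case using R_long by simp
next
  case (Suc K)
  let ?S = "(actR m la ^^ Suc K) (N, B @ [f])"
  let ?B = "B @ [(f - int (cc m)) mod qq m] @ concat (replicate K [1, sx]) @ [1]"
  have S: "?S = (fst ?S, ?B @ [0])" using Suc by (metis append.assoc append_Cons append_Nil prod.collapse)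
  have v: "vs m (fst ?S, ?B @ [0])" using vs_actR_pow[OF Suc.prems(1), where x=la and n="Suc K"] S by metis
  have "snd ((actR m la ^^ Suc (Suc K)) (N, B @ [f])) = snd (actR m la (fst ?S, ?B @ [0]))"
    using S by (metis funpow.simps(2) comp_apply)
  also have "\<dots> = ?B @ [sx, 1, 0]" using R_long[OF v] s_mod s_props by simp
  also have "\<dots> = B @ [(f - int (cc m)) mod qq m] @ concat (replicate (Suc K) [1, sx]) @ [1, 0]"
    using concat_rep_comm[of "[1, sx]" K] by simp
  finally show ?case .
qed

lemma actL_long: "vs m (N, f # T) \<Longrightarrow> (f \<noteq> 0 \<or> T = []) \<Longrightarrow> snd (actL m (N, f # T)) = sx # 1 # f # T"
proof -
  assume v: "vs m (N, f # T)" and c: "f \<noteq> 0 \<or> T = []"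
  have "\<not> (3 \<le> length (f # T) \<and> hd (f # T) = 0)" using c by auto
  then have "Ly (pp m) (N, f # T) = (N, 0 # 1 # f # T)" by (simp only: Ly.simps if_not_P if_False)
  moreover have "vx (qq m) 0" using q0[OF m2] by (simp add: vx_def)
  ultimately show ?thesis using Lxi_pow[OF q0[OF m2] ppc[OF m2], of 0 "cc m" N "1 # f # T"] s_mod
    by (simp add: actL_def)
qed

lemma actL_short: "vs m (N, 0 # T) \<Longrightarrow> T \<noteq> [] \<Longrightarrow> length (snd (actL m (N, 0 # T))) + 2 = length (0 # T)"
proof -
  assume v: "vs m (N, 0 # T)" and Tn: "T \<noteq> []"
  have vl: "vl (qq m) (pp m) (0 # T)" using v by (simp add: vs_def)
  then obtain e T2 where T: "T = e # T2" using Tn by (cases T) auto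
  have e: "e = 1" and T2: "vl (qq m) (pp m) T2" using vl T vy_odd by auto
  then obtain g T3 where T2': "T2 = g # T3" by (cases T2) auto
  have lT2: "1 \<le> length T2" using T2' by simp
  have "Ly (pp m) (N, 0 # T) = (N + 1, T2)" using T e p_odd lT2 by simp
  moreover have g: "vx (qq m) g" using T2 T2' by (auto intro: vl_hd)
  ultimately show ?thesis using Lxi_pow[OF q0[OF m2] ppc[OF m2] g, of "cc m" "N + 1" T3] T T2'
    by (simp add: actL_def)
qed

lemma L_iter: "vs m (N, f # T) \<Longrightarrow> (f \<noteq> 0 \<or> T = []) \<Longrightarrow>
  snd ((actL m ^^ K) (N, f # T)) = concat (replicate K [sx, 1]) @ f # T"
proof (induction K)
  case 0 then show ?case by simp
next
  case (Suc K)
  let ?S = "(actL m ^^ K) (N, f # T)"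
  obtain h T' where hT: "concat (replicate K [sx, 1]) @ f # T = h # T'" and c: "h \<noteq> 0 \<or> T' = []"
  proof (cases K)
    case 0 then show ?thesis using that Suc.prems by simp
  next
    case (Suc K')
    then show ?thesis using that s_props by simp
  qed
  have S: "?S = (fst ?S, h # T')" using Suc hT by (metis prod.collapse)
  have v: "vs m (fst ?S, h # T')" using vs_actL_pow[OF Suc.prems(1), where n=K] S by metis
  have "snd ((actL m ^^ Suc K) (N, f # T)) = snd (actL m (fst ?S, h # T'))"
    using S by (metis funpow.simps(2) comp_apply)
  also have "\<dots> = sx # 1 # h # T'" using actL_long[OF v c] .
  finally show ?case using hT by simp
qed


lemma phi_a_pow_odd: "snd (phi m (concat (replicate j [la]))) = concat (replicate j [sx, 1]) @ [0]"
proof (cases j)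
  case 0 then show ?thesis by (simp add: phi_def)
next
  case (Suc K)
  have v: "vs m (0, [] @ [0])" using vs_init[OF m2] by simp
  have "phi m (concat (replicate j [la])) = (actR m la ^^ Suc K) (0, [] @ [0])"
    using phi_rep_right[where w="[]" and K=j and x=la] Suc by (simp add: phi_def)
  then have "snd (phi m (concat (replicate j [la]))) = [sx] @ concat (replicate K [1, sx]) @ [1, 0]"
    using R_iter[OF v, of K] s_mod s_props by simp
  then show ?thesis using list_x2 Suc by simp
qed

lemma cent_odd: "0 < K \<Longrightarrow> artin_eq m (w @ concat (replicate K [la])) (concat (replicate K [la]) @ w)
  \<Longrightarrow> \<exists>i j. artin_eq m w (word_pow (delta m) i @ word_pow [la] j)"
proof (induction "length (snd (phi m w))" arbitrary: w rule: less_induct)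
  case less
  let ?A = "concat (replicate K [la])"
  obtain N L where P: "phi m w = (N, L)" by (cases "phi m w")
  have v: "vs m (N, L)" using vs_phi[OF m2, of w] P by simp
  have vl: "vl (qq m) (pp m) L" using v by (simp add: vs_def)
  then have Ln: "L \<noteq> []" by auto
  obtain B f where LB: "L = B @ [f]" using snoc1[OF Ln] by blast
  obtain f0 T where LT: "L = f0 # T" using Ln by (cases L) auto
  show ?case
  proof (cases "f0 = 0 \<and> T \<noteq> []")
    case True
    have "phi m (la # w) = actL m (N, L)" using phi_Cons_a[OF m2] P by simp
    then have "length (snd (phi m (la # w))) < length (snd (phi m w))"
      using actL_short[of N T] v True LT P by simp
    moreover have "artin_eq m ((la # w) @ ?A) (?A @ (la # w))" using comm_Cons[OF m2 less.prems(2)] by simp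
    ultimately obtain i j where "artin_eq m (la # w) (word_pow (delta m) i @ word_pow [la] j)"
      using less.hyps less.prems(1) by blast
    then show ?thesis using shift_left[OF m2] by blast
  next
    case F1: False
    show ?thesis
    proof (cases "(f - int (cc m)) mod qq m = 0 \<and> B \<noteq> []")
      case True
      have "phi m (w @ [la]) = actR m la (N, L)" using P by (simp add: phi_append)
      then have "length (snd (phi m (w @ [la]))) < length (snd (phi m w))"
        using R_short[of N B f] v True LB P by simp
      moreover have "artin_eq m ((w @ [la]) @ ?A) (?A @ (w @ [la]))" using comm_snoc[OF m2 less.prems(2)] by simp
      ultimately obtain i j where "artin_eq m (w @ [la]) (word_pow (delta m) i @ word_pow [la] j)"
        using less.hyps less.prems(1) by blast
      then show ?thesis using shift_right[OF m2] by blast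
    next
      case F2: False
      obtain K' where K: "K = Suc K'" using less.prems(1) by (cases K) auto
      have "phi m (w @ ?A) = phi m (?A @ w)" by (rule phi_inv[OF m2 less.prems(2)])
      then have eq: "snd ((actR m la ^^ K) (N, B @ [f])) = snd ((actL m ^^ K) (N, f0 # T))"
        using P LB LT phi_rep_right[where w=w and K=K and x=la] phi_rep_left[OF m2, of K w] by simp
      have c1: "(f - int (cc m)) mod qq m \<noteq> 0 \<or> B = []" using F2 by auto
      have c2: "f0 \<noteq> 0 \<or> T = []" using F1 by auto
      have R: "snd ((actR m la ^^ K) (N, B @ [f])) = B @ [(f - int (cc m)) mod qq m] @ concat (replicate K' [1, sx]) @ [1, 0]"
        using R_iter[of N B f K'] v LB c1 K by simp
      have Lf: "snd ((actL m ^^ K) (N, f0 # T)) = concat (replicate K [sx, 1]) @ L"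
        using L_iter[of N f0 T K] v LT c2 by simp
      have "last (snd ((actR m la ^^ K) (N, B @ [f]))) = 0" using R by simp
      then have "last (snd ((actL m ^^ K) (N, f0 # T))) = 0" using eq by simp
      then have "last (concat (replicate K [sx, 1]) @ L) = 0" using Lf by simp
      then have f0': "f = 0" using LB by simp
      then have fs: "(f - int (cc m)) mod qq m = sx" using s_mod by simp
      show ?thesis
      proof (cases "B = []")
        case True
        then have "L = [0]" using LB f0' by simp
        then have p1: "phi m w = (N, [0])" using P by simp
        have p2: "phi m [] = (0, [0])" by (simp add: phi_def)
        have "artin_eq m w (word_pow (delta m) (N - 0) @ [])" by (rule faithful_delta[OF m2 p1 p2])
        then show ?thesis by (intro exI[of _ N] exI[of _ 0]) simp
      next
        case False
        have "B @ [sx] @ concat (replicate K' [1, sx]) @ [1, 0] = concat (replicate K [sx, 1]) @ B @ [0]"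
          using eq R Lf LB f0' fs by simp
        moreover have "[sx] @ concat (replicate K' [1, sx]) @ [1, 0] = concat (replicate K [sx, 1]) @ [0]"
          using list_x2 K by simp
        ultimately have "B @ concat (replicate K [sx, 1]) = concat (replicate K [sx, 1]) @ B"
          by simp
        moreover have "even (length B)" using vl_odd[OF vl] LB by simp
        ultimately obtain j where Bj: "B = concat (replicate j [sx, 1])"
          using rep_comm_pow[of K B sx 1] less.prems(1) by auto
        have "snd (phi m (concat (replicate j [la]))) = L" using phi_a_pow_odd Bj LB f0' by simp
        then have pj: "phi m (concat (replicate j [la])) = (fst (phi m (concat (replicate j [la]))), L)"
          by (metis prod.collapse)
        have "artin_eq m w (word_pow (delta m) (N - fst (phi m (concat (replicate j [la])))) @ word_pow [la] (int j))"
          using faithful_delta[OF m2 P pj] by (simp only: wp_of_nat)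
        then show ?thesis by blast
      qed
    qed
  qed
qed
end


definition Gf :: "int list \<Rightarrow> int \<Rightarrow> int list" where "Gf T e = (if e = 0 then T else 0 # e # T)"
definition Hf :: "int list \<Rightarrow> int \<Rightarrow> int list" where "Hf B e = (if e = 0 then B else B @ [e, 0])"

lemma Ly_G: "T \<noteq> [] \<Longrightarrow> (hd T \<noteq> 0 \<or> length T = 1) \<Longrightarrow> Ly 0 (N, Gf T e) = (N, Gf T (e + 1))"
proof (cases "e = 0")
  case True
  assume "T \<noteq> []" "hd T \<noteq> 0 \<or> length T = 1"
  then have c: "\<not> (3 \<le> length T \<and> hd T = 0)" by auto
  have "Ly 0 (N, T) = (N, 0 # 1 # T)" by (simp only: Ly.simps if_not_P[OF c] if_False)
  then show ?thesis using True by (simp add: Gf_def)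
next
  case False
  assume Tn: "T \<noteq> []"
  then have "1 \<le> length T" by (cases T) auto
  then show ?thesis using False by (simp add: Gf_def)
qed

lemma Ly_G_pow: "T \<noteq> [] \<Longrightarrow> (hd T \<noteq> 0 \<or> length T = 1) \<Longrightarrow> (Ly 0 ^^ K) (N, Gf T e) = (N, Gf T (e + int K))"
proof (induction K)
  case (Suc K)
  have "(Ly 0 ^^ Suc K) (N, Gf T e) = Ly 0 (N, Gf T (e + int K))" using Suc by (simp del: Ly.simps)
  also have "\<dots> = (N, Gf T (e + int K + 1))" using Ly_G Suc.prems by blast
  finally show ?case by (simp add: algebra_simps)
qed simp

lemma Ry_H: "B \<noteq> [] \<Longrightarrow> (last B \<noteq> 0 \<or> length B = 1) \<Longrightarrow> Ry 0 (N, Hf B e) = (N, Hf B (e + 1))"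
proof (cases "e = 0")
  case True
  assume "B \<noteq> []" "last B \<noteq> 0 \<or> length B = 1"
  then have c: "\<not> (3 \<le> length B \<and> last B = 0)" by auto
  have "Ry 0 (N, B) = (N, B @ [1, 0])" by (simp only: Ry.simps if_not_P[OF c] if_False)
  then show ?thesis using True by (simp add: Hf_def)
next
  case False
  assume Bn: "B \<noteq> []"
  then have lB: "1 \<le> length B" by (cases B) auto
  show ?thesis using False Ry_merge[OF lB, of 0 N e] by (simp add: Hf_def)
qed

lemma Ry_H_pow: "B \<noteq> [] \<Longrightarrow> (last B \<noteq> 0 \<or> length B = 1) \<Longrightarrow> (Ry 0 ^^ K) (N, Hf B e) = (N, Hf B (e + int K))"
proof (induction K)
  case (Suc K)
  have "(Ry 0 ^^ Suc K) (N, Hf B e) = Ry 0 (N, Hf B (e + int K))" using Suc by (simp del: Ry.simps)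
  also have "\<dots> = (N, Hf B (e + int K + 1))" using Ry_H Suc.prems by blast
  finally show ?case by (simp add: algebra_simps)
qed simp

lemma left_dec: "vl q p L \<Longrightarrow> \<exists>T e. L = Gf T e \<and> T \<noteq> [] \<and> (hd T \<noteq> 0 \<or> length T = 1)"
proof -
  assume v: "vl q p L"
  show ?thesis
  proof (cases "3 \<le> length L \<and> hd L = 0")
    case True
    then obtain x e T where L0: "L = x # e # T" using cons2[of L] by auto
    with True have L: "L = 0 # e # T" by simp
    have "vy p e" "vl q p T" "1 < length T \<longrightarrow> hd T \<noteq> 0" using v L by auto
    moreover have "T \<noteq> []" using \<open>vl q p T\<close> by auto
    moreover have "length T \<noteq> 1 \<longrightarrow> 1 < length T" using \<open>T \<noteq> []\<close> by (cases T) auto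
    ultimately show ?thesis using L by (intro exI[of _ T] exI[of _ e]) (auto simp: Gf_def vy_def)
  next
    case False
    have "1 < length L \<longrightarrow> 3 \<le> length L" using vl_len3[OF v] by auto
    moreover have "L \<noteq> []" using v by auto
    moreover have "length L \<noteq> 1 \<longrightarrow> 1 < length L" using \<open>L \<noteq> []\<close> by (cases L) auto
    ultimately show ?thesis using False by (intro exI[of _ L] exI[of _ 0]) (auto simp: Gf_def)
  qed
qed

lemma right_dec: "vl q p L \<Longrightarrow> \<exists>B e. L = Hf B e \<and> B \<noteq> [] \<and> (last B \<noteq> 0 \<or> length B = 1)"
proof -
  assume v: "vl q p L"
  show ?thesis
  proof (cases "3 \<le> length L \<and> last L = 0")
    case True
    then obtain B e where L: "L = B @ [e, 0]" using snoc2[of L] by fastforce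
    have h: "vl q p B" "vy p e" "1 < length B \<longrightarrow> last B \<noteq> 0" using v L vl_snoc by auto
    have "B \<noteq> []" using h(1) by auto
    then have "last B \<noteq> 0 \<or> length B = 1" using h(3) by (cases B) auto
    then show ?thesis using L h(2) \<open>B \<noteq> []\<close> by (intro exI[of _ B] exI[of _ e]) (auto simp: Hf_def vy_def)
  next
    case False
    have "1 < length L \<longrightarrow> 3 \<le> length L" using vl_len3[OF v] by auto
    moreover have "L \<noteq> []" using v by auto
    moreover have "length L \<noteq> 1 \<longrightarrow> 1 < length L" using \<open>L \<noteq> []\<close> by (cases L) auto
    ultimately show ?thesis using False by (intro exI[of _ L] exI[of _ 0]) (auto simp: Hf_def)
  qed
qed

lemma even_comb:
  assumes K: "(K::int) \<noteq> 0" and oL: "odd (length L)"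
    and G: "L = Gf T el" "T \<noteq> []" "hd T \<noteq> 0 \<or> length T = 1"
    and H: "L = Hf B er" "B \<noteq> []" "last B \<noteq> 0 \<or> length B = 1"
    and E: "Gf T (el + K) = Hf B (er + K)"
  shows "L = [0] \<or> (\<exists>e. e \<noteq> 0 \<and> L = [0, e, 0])"
proof (cases "el = 0")
  case True
  then have LT: "L = T" using G by (simp add: Gf_def)
  have LHS: "Gf T (el + K) = 0 # K # L" using True K LT by (simp add: Gf_def)
  show ?thesis
  proof (cases "er = 0")
    case True
    then have "B = L" using H by (simp add: Hf_def)
    then have "0 # K # L = L @ [K, 0]" using E LHS True K by (simp add: Hf_def)
    then have "hd L = 0" "L \<noteq> []" using G LT by (cases L; auto)+
    then have "length L = 1" using G LT by auto
    then show ?thesis using \<open>hd L = 0\<close> by (cases L) auto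
  next
    case False
    then have LB: "L = B @ [er, 0]" using H by (simp add: Hf_def)
    then have "hd L = hd B" using H by simp
    moreover have "length L \<noteq> 1" using LB by simp
    ultimately have "hd B \<noteq> 0" using G LT by auto
    moreover have "hd (Hf B (er + K)) = hd B" using H by (simp add: Hf_def)
    moreover have "hd (Hf B (er + K)) = 0" using E LHS by (metis list.sel(1))
    ultimately show ?thesis by simp
  qed
next
  case F1: False
  then have LT: "L = 0 # el # T" using G by (simp add: Gf_def)
  show ?thesis
  proof (cases "er = 0")
    case True
    then have "B = L" using H by (simp add: Hf_def)
    then have "length (Hf B (er + K)) = length L + 2" using True K by (simp add: Hf_def)
    moreover have "length (Gf T (el + K)) \<le> length L" using LT by (simp add: Gf_def)
    ultimately show ?thesis using E by simp
  next
    case F2: False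
    then have LB: "L = B @ [er, 0]" using H by (simp add: Hf_def)
    show ?thesis
    proof (cases "length L = 3")
      case True
      then have "length T = 1" using LT by simp
      then obtain t where Tt: "T = [t]" by (cases T) auto
      have "last L = t" using LT Tt by simp
      moreover have "last L = 0" using LB by simp
      ultimately have "T = [0]" using Tt by simp
      then show ?thesis using LT F1 by auto
    next
      case False
      moreover have "3 \<le> length L" using LT G(2) by (cases T) auto
      ultimately have l5: "5 \<le> length L" using oL by presburger
      then have lT: "3 \<le> length T" using LT by simp
      then have hT: "hd T \<noteq> 0" using G(3) by auto
      have lB: "3 \<le> length B" using l5 LB by simp
      have hB: "hd B = 0" using LB LT lB by (cases B) auto
      have B1: "B ! 1 = el" using LB LT lB by (metis One_nat_def Suc_le_eq nth_Cons_Suc nth_Cons_0 nth_append numeral_3_eq_3 less_le_trans zero_less_Suc order.strict_trans1 one_less_numeral_iff semiring_norm(77))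
      show ?thesis
      proof (cases "el + K = 0")
        case True
        then have g: "Gf T (el + K) = T" by (simp add: Gf_def)
        show ?thesis
        proof (cases "er + K = 0")
          case True
          then have "T = B" using E g by (simp add: Hf_def)
          then show ?thesis using hT hB by simp
        next
          case False
          then have "length (Hf B (er + K)) = length L" using LB by (simp add: Hf_def)
          then show ?thesis using E g LT by simp
        qed
      next
        case False
        then have g: "Gf T (el + K) = 0 # (el + K) # T" by (simp add: Gf_def)
        show ?thesis
        proof (cases "er + K = 0")
          case True
          then have "length (Hf B (er + K)) + 2 = length L" using LB by (simp add: Hf_def)
          moreover have "length (Gf T (el + K)) = length L" using g LT by simp
          ultimately show ?thesis using E by simp
        next
          case F3: False
          then have "0 # (el + K) # T = B @ [er + K, 0]" using E g by (simp add: Hf_def)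
          then have "(0 # (el + K) # T) ! 1 = (B @ [er + K, 0]) ! 1" by simp
          then have "el + K = B ! 1" using lB by (simp add: nth_append)
          then show ?thesis using B1 K by simp
        qed
      qed
    qed
  qed
qed


context
  fixes m :: nat
  assumes m2: "2 \<le> m" and ev: "\<not> odd m"
begin

lemma pp_even: "pp m = 0" using ev by (simp add: pp_def)
lemma cc_even: "cc m = 0" using ev by (simp add: cc_def)

lemma actR_la_even: "actR m la = Ry 0"
  by (simp add: fun_eq_iff actR_def pp_even cc_even)
lemma actL_even: "actL m = Ly 0"
  by (simp add: fun_eq_iff actL_def pp_even cc_even)

lemma phi_a_pow_even: "e \<noteq> 0 \<Longrightarrow> phi m (word_pow [la] e) = (0, [0, e, 0])"
proof -
  assume e: "e \<noteq> 0"
  have "Yw m = [la]" using ev by (simp add: Yw_def)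
  moreover have "vy (pp m) e" using e by (simp add: vy_def pp_even)
  ultimately show ?thesis
    using actw_Yw_pow[OF m2 vs_init[OF m2], of e] by (simp add: phi_def)
qed

lemma cent_even: "0 < K \<Longrightarrow> artin_eq m (w @ concat (replicate K [la])) (concat (replicate K [la]) @ w)
  \<Longrightarrow> \<exists>i j. artin_eq m w (word_pow (delta m) i @ word_pow [la] j)"
proof -
  assume K: "0 < K" and c: "artin_eq m (w @ concat (replicate K [la])) (concat (replicate K [la]) @ w)"
  obtain N L where P: "phi m w = (N, L)" by (cases "phi m w")
  have v: "vs m (N, L)" using vs_phi[OF m2, of w] P by simp
  have vl: "vl (qq m) (pp m) L" using v by (simp add: vs_def)
  obtain T el where G: "L = Gf T el" "T \<noteq> []" "hd T \<noteq> 0 \<or> length T = 1" using left_dec[OF vl] by blast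
  obtain B er where H: "L = Hf B er" "B \<noteq> []" "last B \<noteq> 0 \<or> length B = 1" using right_dec[OF vl] by blast
  have "phi m (w @ concat (replicate K [la])) = phi m (concat (replicate K [la]) @ w)"
    by (rule phi_inv[OF m2 c])
  then have "(Ry 0 ^^ K) (N, L) = (Ly 0 ^^ K) (N, L)"
    using P phi_rep_right[where w=w and K=K and x=la] phi_rep_left[OF m2, of K w]
    by (simp add: actR_la_even actL_even)
  moreover have "(Ry 0 ^^ K) (N, L) = (N, Hf B (er + int K))" using Ry_H_pow[OF H(2,3)] H(1) by simp
  moreover have "(Ly 0 ^^ K) (N, L) = (N, Gf T (el + int K))" using Ly_G_pow[OF G(2,3)] G(1) by simp
  ultimately have E: "Gf T (el + int K) = Hf B (er + int K)" by simp
  have "L = [0] \<or> (\<exists>e. e \<noteq> 0 \<and> L = [0, e, 0])"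
    by (rule even_comb[OF _ vl_odd[OF vl] G H E]) (use K in simp)
  then show ?thesis
  proof
    assume "L = [0]"
    then have p1: "phi m w = (N, [0])" using P by simp
    have p2: "phi m [] = (0, [0])" by (simp add: phi_def)
    have "artin_eq m w (word_pow (delta m) (N - 0) @ [])" by (rule faithful_delta[OF m2 p1 p2])
    then show ?thesis by (intro exI[of _ N] exI[of _ 0]) simp
  next
    assume "\<exists>e. e \<noteq> 0 \<and> L = [0, e, 0]"
    then obtain e where e: "e \<noteq> 0" "L = [0, e, 0]" by blast
    have "artin_eq m w (word_pow (delta m) (N - 0) @ word_pow [la] e)"
    proof -
      have P': "phi m w = (N, [0, e, 0])" using P e(2) by simp
      show ?thesis using faithful_delta[OF m2 P' phi_a_pow_even[OF e(1)]] by simp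
    qed
    then show ?thesis by blast
  qed
qed

end


lemma cent_main: "2 \<le> m \<Longrightarrow> 0 < K \<Longrightarrow> artin_eq m (w @ concat (replicate K [la])) (concat (replicate K [la]) @ w)
  \<Longrightarrow> \<exists>i j. artin_eq m w (word_pow (delta m) i @ word_pow [la] j)"
proof (cases "odd m")
  case True
  assume "2 \<le> m" "0 < K" "artin_eq m (w @ concat (replicate K [la])) (concat (replicate K [la]) @ w)"
  then show ?thesis using cent_odd[of m K w] True by blast
next
  case False
  assume "2 \<le> m" "0 < K" "artin_eq m (w @ concat (replicate K [la])) (concat (replicate K [la]) @ w)"
  then show ?thesis using cent_even[of m K w] False by blast
qed

lemma apow_nontriv: "2 \<le> m \<Longrightarrow> 0 < d \<Longrightarrow> snd (phi m (word_pow [la] d)) \<noteq> [0]"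
proof (cases "odd m")
  case True
  assume m2: "2 \<le> m" and d: "0 < d"
  obtain n where n: "nat d = Suc n" using d by (cases "nat d") auto
  have "word_pow [la] d = concat (replicate (nat d) [la])" using d by (simp add: word_pow_def)
  then show ?thesis using phi_a_pow_odd[OF m2 True, of "nat d"] n by simp
next
  case False
  assume m2: "2 \<le> m" and d: "0 < d"
  then show ?thesis using phi_a_pow_even[OF m2 False, of d] by simp
qed

lemma phi_delta_pow: "2 \<le> m \<Longrightarrow> phi m (word_pow (delta m) e) = (e, [0])"
  using phi_delta_app[of m e "[]"] by (simp add: phi_def)

lemma uniq_aux: "2 \<le> m \<Longrightarrow> 0 < d \<Longrightarrow> \<not> artin_eq m (word_pow [la] d) (word_pow (delta m) e)"
proof
  assume m2: "2 \<le> m" and d: "0 < d" and h: "artin_eq m (word_pow [la] d) (word_pow (delta m) e)"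
  have "phi m (word_pow [la] d) = phi m (word_pow (delta m) e)" by (rule phi_inv[OF m2 h])
  then show False using apow_nontriv[OF m2 d] phi_delta_pow[OF m2, of e] by simp
qed

lemma uniq: assumes m2: "2 \<le> m" and h: "artin_eq m (word_pow (delta m) i @ word_pow [la] j) (word_pow (delta m) i' @ word_pow [la] j')"
  shows "i = i' \<and> j = j'"
proof -
  let ?D = "word_pow (delta m)" and ?A = "word_pow [la]"
  have "artin_eq m (?A j) (?D (-i) @ ?D i @ ?A j)"
    using ae_appR[OF wp_add[of m "delta m" "-i" i], of "?A j"] by (simp add: ae_sym)
  also have "artin_eq m (?D (-i) @ ?D i @ ?A j) (?D (-i) @ ?D i' @ ?A j')" using ae_appL[OF h] by simp
  also have "artin_eq m (?D (-i) @ ?D i' @ ?A j') (?D (i' - i) @ ?A j')"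
    using ae_appR[OF wp_add[of m "delta m" "-i" i'], of "?A j'"] by simp
  finally have 1: "artin_eq m (?A j) (?D (i' - i) @ ?A j')" .
  have "artin_eq m (?A (j - j')) (?A j @ ?A (-j'))" using wp_add[of m "[la]" j "-j'"] by (simp add: ae_sym)
  also have "artin_eq m (?A j @ ?A (-j')) (?D (i' - i) @ ?A j' @ ?A (-j'))" using ae_appR[OF 1] by simp
  also have "artin_eq m (?D (i' - i) @ ?A j' @ ?A (-j')) (?D (i' - i))"
    using ae_appL[OF wp_add[of m "[la]" j' "-j'"], of "?D (i' - i)"] by simp
  finally have 2: "artin_eq m (?A (j - j')) (?D (i' - i))" .
  have jj: "j = j'"
  proof (rule ccontr)
    assume "j \<noteq> j'"
    show False
    proof (cases "0 < j - j'")
      case True then show False using uniq_aux[OF m2 True] 2 by blast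
    next
      case False
      then have "0 < j' - j" using \<open>j \<noteq> j'\<close> by simp
      moreover have "artin_eq m (?A (j' - j)) (?D (i - i'))" using ae_inv[OF 2] by (simp add: inv_wp)
      ultimately show False using uniq_aux[OF m2] by blast
    qed
  qed
  then have "artin_eq m [] (?D (i' - i))" using 2 by simp
  then have "phi m [] = phi m (?D (i' - i))" by (rule phi_inv[OF m2])
  then have "i' - i = 0" using phi_delta_pow[OF m2, of "i' - i"] by (simp add: phi_def)
  then show ?thesis using jj by simp
qed

lemma comm_transfer: "artin_eq m w w' \<Longrightarrow> comm m w' g \<Longrightarrow> comm m w g"
proof -
  assume h: "artin_eq m w w'" and c: "comm m w' g"
  have "artin_eq m (w @ g) (w' @ g)" by (rule ae_appR[OF h])
  also have "artin_eq m (w' @ g) (g @ w')" using c by (simp add: comm_def)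
  also have "artin_eq m (g @ w') (g @ w)" by (rule ae_appL[OF ae_sym[OF h]])
  finally show ?thesis by (simp add: comm_def)
qed

lemma comm_app_left: "comm m u1 v \<Longrightarrow> comm m u2 v \<Longrightarrow> comm m (u1 @ u2) v"
proof -
  assume "comm m u1 v" "comm m u2 v"
  then have "comm m v (u1 @ u2)" by (intro comm_app2) (simp_all add: comm_sym)
  then show ?thesis by (rule comm_sym)
qed

lemma comm_la_pows: "comm m (word_pow [la] j) (word_pow [la] k)"
proof -
  have "comm m [la] [la]" by (simp add: comm_def)
  then have "comm m [la] (word_pow [la] j)" by (rule comm_wp)
  then have "comm m (word_pow [la] j) [la]" by (rule comm_sym)
  then show ?thesis by (rule comm_wp)
qed

lemma comm_normal: "2 \<le> m \<Longrightarrow> comm m (word_pow (delta m) i @ word_pow [la] j) (word_pow (delta m) k1 @ word_pow [la] k2)"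
proof -
  assume m2: "2 \<le> m"
  let ?Y = "word_pow (delta m) k1 @ word_pow [la] k2"
  have 1: "comm m (word_pow (delta m) i) ?Y" by (rule delta_pow_central[OF m2])
  have "comm m (word_pow [la] j) (word_pow (delta m) k1)"
    by (rule comm_sym, rule delta_pow_central[OF m2])
  then have 2: "comm m (word_pow [la] j) ?Y" by (rule comm_app2) (rule comm_la_pows)
  show ?thesis by (rule comm_app_left[OF 1 2])
qed

theorem lemma2p4:
  fixes m :: nat and k1 k2 :: int
  assumes "m \<ge> 2" and "k2 \<noteq> 0"
  shows "centralizer_words m (word_pow (delta m) k1 @ word_pow a1 k2)
           = {w. \<exists>i j :: int. artin_eq m w (word_pow (delta m) i @ word_pow a1 j)}
       \<and> artin_eq m (delta m @ a1) (a1 @ delta m)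
       \<and> (\<forall>i j i' j' :: int.
            artin_eq m (word_pow (delta m) i @ word_pow a1 j) (word_pow (delta m) i' @ word_pow a1 j')
            \<longrightarrow> i = i' \<and> j = j')"
proof -
  have m2: "2 \<le> m" using assms(1) by simp
  have a1: "a1 = [la]" by (simp add: a1_def gen_def)
  let ?g = "word_pow (delta m) k1 @ word_pow [la] k2"
  have C: "centralizer_words m ?g = {w. \<exists>i j :: int. artin_eq m w (word_pow (delta m) i @ word_pow [la] j)}"
  proof (intro set_eqI iffI)
    fix w assume "w \<in> centralizer_words m ?g"
    then have h: "artin_eq m (w @ ?g) (?g @ w)" by (simp add: centralizer_words_def)
    have "artin_eq m (word_pow (delta m) k1 @ w @ word_pow [la] k2) (w @ ?g)"
      using DC[OF m2, of w k1 "word_pow [la] k2"] by (simp add: ae_sym)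
    also have "artin_eq m (w @ ?g) (?g @ w)" by (rule h)
    finally have "artin_eq m (word_pow (delta m) k1 @ w @ word_pow [la] k2) (word_pow (delta m) k1 @ word_pow [la] k2 @ w)"
      by simp
    then have c: "comm m w (word_pow [la] k2)" unfolding comm_def by (rule ae_cancel_l)
    define K where "K = nat \<bar>k2\<bar>"
    have K0: "0 < K" using assms(2) by (simp add: K_def)
    have "comm m w (word_pow [la] \<bar>k2\<bar>)"
    proof (cases "0 < k2")
      case True then show ?thesis using c by simp
    next
      case False
      then have "\<bar>k2\<bar> = - k2" by simp
      then show ?thesis using comm_inv[OF c] by (simp add: inv_wp)
    qed
    moreover have "word_pow [la] \<bar>k2\<bar> = concat (replicate K [la])" by (simp add: K_def word_pow_def)
    ultimately have "artin_eq m (w @ concat (replicate K [la])) (concat (replicate K [la]) @ w)"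
      by (simp add: comm_def)
    then show "w \<in> {w. \<exists>i j :: int. artin_eq m w (word_pow (delta m) i @ word_pow [la] j)}"
      using cent_main[OF m2 K0] by blast
  next
    fix w assume "w \<in> {w. \<exists>i j :: int. artin_eq m w (word_pow (delta m) i @ word_pow [la] j)}"
    then obtain i j where h: "artin_eq m w (word_pow (delta m) i @ word_pow [la] j)" by blast
    have "comm m w ?g" by (rule comm_transfer[OF h comm_normal[OF m2]])
    then show "w \<in> centralizer_words m ?g" by (simp add: centralizer_words_def comm_def)
  qed
  have D: "artin_eq m (delta m @ [la]) ([la] @ delta m)"
    using delta_central[OF m2, of "[la]"] by (simp add: comm_def)
  have U: "\<forall>i j i' j' :: int.
            artin_eq m (word_pow (delta m) i @ word_pow [la] j) (word_pow (delta m) i' @ word_pow [la] j')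
            \<longrightarrow> i = i' \<and> j = j'"
    using uniq[OF m2] by blast
  show ?thesis unfolding a1 using C D U by (intro conjI)
qed


end
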